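(* Let $\Sigma$ be a non-empty set of labels containing a distinguished element $\tau$. The category of cubes $\widehat{\square}$ (consisting of all adjacency-preserving maps) is the only category of cubes $\mathcal{A}$ such that for every $n\geq 1$ and every $(a_1,\dots,a_n)\in\Sigma^n$ there is an isomorphism of labelled $\mathcal{A}$-sets \[\mathcal{L}_\mathcal{A}\big(\mathrm{COSK}^\Sigma(\square[a_1,\dots,a_n]_{\leq 1})\big)\cong \mathrm{cosk}_1^{\mathcal{A},\Sigma}(\mathcal{A}[a_1,\dots,a_n]_{\leq 1})\] (and both are then isomorphic to $\mathcal{A}[a_1,\dots,a_n]$).
   Context: Cubes: $[0]=\{()\}$ and $[n]=\{0,1\}^n$ ($n\ge1$) with the product order. ${\rm PoSet}$ denotes posets with strictly increasing maps. Face maps $\delta_i^\alpha:[n-1]\to[n]$ ($1\le i\le n$, $\alpha\in\{0,1\}$) insert $\alpha$ at position $i$. The reduced box category $\square$ is the subcategory of ${\rm PoSet}$ with objects $[n]$, $n\ge 0$, generated by the face maps. The distance on $[n]$ is $d(\epsilon,\epsilon')=\sum_i|\epsilon_i-\epsilon'_i|$; a map $f:[m]\to[n]$ is adjacency-preserving if it is strictly increasing and $d(x,y)=1$ implies $d(f(x),f(y))=1$. A category of cubes is a subcategory $\mathcal{A}$ of ${\rm PoSet}$ with object set $\{[n]:n\ge0\}$, containing $\square$, all of whose morphisms are adjacency-preserving; $\widehat\square$ is the category of cubes of all adjacency-preserving maps. An $\mathcal{A}$-set is a presheaf of sets on $\mathcal{A}$ ($K_n:=K([n])$); a $\square$-set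 is a precubical set. $\mathcal{A}[p]:=\mathcal{A}(-,[p])$, $\partial\mathcal{A}[p]$ is the subpresheaf with the same $k$-cubes for $k<p$ and none in dimension $\ge p$. An $n$-dimensional $\mathcal A$-set is a presheaf on the full subcategory $\mathcal A_n$ on $[k]$, $k\le n$ (identified with $\mathcal A$-sets empty above dimension $n$), and $K_{\le n}$ is the truncation of $K$. $\omega_\mathcal{A}$ is restriction along $\square\subset\mathcal{A}$ and $\mathcal{L}_\mathcal{A}$ its left adjoint. Labels: $!\Sigma$ is the precubical set with $(!\Sigma)_0=\{()\}$, $(!\Sigma)_n=\Sigma^n$, and $\partial_i^0=\partial_i^1$ deleting the $i$-th letter. $\mathrm{sh}_\mathcal{A}$ is the left adjoint of the inclusion into $\mathcal{A}$-sets of the full subcategory of $\mathcal A$-sets $X$ orthogonal to the maps $\mathcal{A}[p]\sqcup_{\partial\mathcal{A}[p]}\mathcal{A}[p]\to\mathcal{A}[p]$, $p\ge2$ (i.e. two $p$-cubes of $X$, $p\ge2$, with the same boundary are equal). A labelled $\mathcal{A}$-set is an object of the slice category of $\mathcal{A}$-sets over $\mathrm{sh}_\mathcal{A}\mathcal{L}_\mathcal{A}(!\Sigma)$; for $\mathcal A=\square$ this is a precubical set over $!\Sigma$ (labelled precubical set). $\mathcal L_\mathcal A$ sends a labelled precubical set $K\to!\Sigma$ to $\mathcal L_\mathcal A(K)\to\mathcal L_\mathcal A(!\Sigma)\to\mathrm{sh}_\mathcal A\mathcal L_\mathcal A(!\Sigma)$. $\square[a_1,\dots,a_n]$ is $\square[n]\to!\Sigma$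 sending $\mathrm{id}_{[n]}$ to $(a_1,\dots,a_n)$, and $\mathcal{A}[a_1,\dots,a_n]:=\mathcal{L}_\mathcal{A}(\square[a_1,\dots,a_n])$. $\mathrm{cosk}_1^{\mathcal{A},\Sigma}$ is the right adjoint of the truncation functor $K\mapsto K_{\le 1}$ from labelled $\mathcal{A}$-sets to labelled $1$-dimensional $\mathcal{A}$-sets (over $\mathrm{sh}_\mathcal{A}\mathcal{L}_\mathcal{A}(!\Sigma)$). Labelled directed coskeleton: let $K$ be a $1$-dimensional labelled precubical set with $K_0$ identified with $[p]$. For an $n$-cube $x$ of $\mathrm{cosk}_1^{\square,\Sigma}(K)$ let $x_0:[n]\cong\square([0],[n])\to K_0=[p]$ be the induced map on $0$-cubes. A map $[n]\to[p]$ is non-twisted if it is a composite $\psi\circ\phi$ with $\psi:[q]\to[p]$ in $\square$ and $\phi:[n]\to[q]$ of the form $(\epsilon_1,\dots,\epsilon_n)\mapsto(\epsilon_{i_1},\dots,\epsilon_{i_q})$ with $\{1,\dots,n\}\subset\{i_1,\dots,i_q\}$ and such that, reading left to right, the first occurrence of $\epsilon_i$ precedes the first occurrence of $\epsilon_{i+1}$ for each $i$. $\mathrm{COSK}^\Sigma(K)$ is the labelled sub-precubical set of $\mathrm{cosk}_1^{\square,\Sigma}(K)$ with the same cubes in dimensions $\le1$ and whose $n$-cubes, $n\ge2$, are those $x$ with $x_0$ non-twisted. *)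

theory Defs
  imports Main
begin

text \<open>A vertex of the cube [n] is a boolean list of length n (False = 0, True = 1).
  A map [m] -> [n] is encoded as a triple (m, n, g); g is normalised to be
  undefined outside the vertices of [m], so that equality of maps is extensional.\<close>

type_synonym vert = "bool list"
type_synonym cmap = "nat \<times> nat \<times> (vert \<Rightarrow> vert)"

definition cube :: "nat \<Rightarrow> vert set" where
  "cube n = {v. length v = n}"

definition dom_c :: "cmap \<Rightarrow> nat" where "dom_c f = fst f"
definition cod_c :: "cmap \<Rightarrow> nat" where "cod_c f = fst (snd f)"
definition fun_c :: "cmap \<Rightarrow> vert \<Rightarrow> vert" where "fun_c f = snd (snd f)"

definition mk_map :: "nat \<Rightarrow> nat \<Rightarrow> (vert \<Rightarrow> vert) \<Rightarrow> cmap" where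
  "mk_map m n g = (m, n, \<lambda>v. if length v = m then g v else undefined)"

definition wf_map :: "cmap \<Rightarrow> bool" where
  "wf_map f \<longleftrightarrow> (\<forall>v \<in> cube (dom_c f). fun_c f v \<in> cube (cod_c f))
      \<and> f = mk_map (dom_c f) (cod_c f) (fun_c f)"

definition idc :: "nat \<Rightarrow> cmap" where
  "idc n = mk_map n n id"

definition comp_c :: "cmap \<Rightarrow> cmap \<Rightarrow> cmap" where
  "comp_c g f = mk_map (dom_c f) (cod_c g) (fun_c g \<circ> fun_c f)"

text \<open>face n i a : [n-1] -> [n] inserts a at position i (1 <= i <= n).\<close>
definition face :: "nat \<Rightarrow> nat \<Rightarrow> bool \<Rightarrow> cmap" where
  "face n i a = mk_map (n - 1) n (\<lambda>v. take (i - 1) v @ [a] @ drop (i - 1) v)"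

inductive_set box :: "cmap set" where
  box_id: "idc n \<in> box"
| box_face: "f \<in> box \<Longrightarrow> 1 \<le> i \<Longrightarrow> i \<le> n \<Longrightarrow> cod_c f = n - 1
              \<Longrightarrow> comp_c (face n i a) f \<in> box"

definition leq_v :: "vert \<Rightarrow> vert \<Rightarrow> bool" where
  "leq_v v w \<longleftrightarrow> list_all2 (\<le>) v w"

definition less_v :: "vert \<Rightarrow> vert \<Rightarrow> bool" where
  "less_v v w \<longleftrightarrow> leq_v v w \<and> v \<noteq> w"

definition dist_v :: "vert \<Rightarrow> vert \<Rightarrow> nat" where
  "dist_v v w = length (filter (\<lambda>(a, b). a \<noteq> b) (zip v w))"

definition adj_pres :: "cmap \<Rightarrow> bool" where
  "adj_pres f \<longleftrightarrow> wf_map f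
     \<and> (\<forall>x \<in> cube (dom_c f). \<forall>y \<in> cube (dom_c f). less_v x y \<longrightarrow> less_v (fun_c f x) (fun_c f y))
     \<and> (\<forall>x \<in> cube (dom_c f). \<forall>y \<in> cube (dom_c f). dist_v x y = 1 \<longrightarrow> dist_v (fun_c f x) (fun_c f y) = 1)"

definition cat_of_cubes :: "cmap set \<Rightarrow> bool" where
  "cat_of_cubes A \<longleftrightarrow> (\<forall>f \<in> A. adj_pres f) \<and> box \<subseteq> A
     \<and> (\<forall>f \<in> A. \<forall>g \<in> A. dom_c g = cod_c f \<longrightarrow> comp_c g f \<in> A)"

definition hat_box :: "cmap set" where
  "hat_box = {f. adj_pres f}"

text \<open>cells X n = the n-cubes; act X f maps cod-cubes to dom-cubes.
  A labelling is a family lab n : cells X n -> cells S n.\<close>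
record 'x psh =
  cells :: "nat \<Rightarrow> 'x set"
  act :: "cmap \<Rightarrow> 'x \<Rightarrow> 'x"

definition lps_iso :: "cmap set \<Rightarrow> 'x psh \<Rightarrow> (nat \<Rightarrow> 'x \<Rightarrow> 'l) \<Rightarrow> 'y psh \<Rightarrow> (nat \<Rightarrow> 'y \<Rightarrow> 'l) \<Rightarrow> bool" where
  "lps_iso A X lX Y lY \<longleftrightarrow> (\<exists>h :: nat \<Rightarrow> 'x \<Rightarrow> 'y.
      (\<forall>n. bij_betw (h n) (cells X n) (cells Y n))
    \<and> (\<forall>f \<in> A. \<forall>x \<in> cells X (cod_c f). h (dom_c f) (act X f x) = act Y f (h (cod_c f) x))
    \<and> (\<forall>n. \<forall>x \<in> cells X n. lY n (h n x) = lX n x))"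

definition trunc1 :: "'x psh \<Rightarrow> 'x psh" where
  "trunc1 X = X\<lparr>cells := \<lambda>k. if k \<le> 1 then cells X k else {}\<rparr>"

definition const_coord :: "cmap \<Rightarrow> nat \<Rightarrow> bool" where
  "const_coord f j \<longleftrightarrow> (\<forall>v \<in> cube (dom_c f). fun_c f v ! j = fun_c f (replicate (dom_c f) False) ! j)"

definition bang_act :: "cmap \<Rightarrow> 's list \<Rightarrow> 's list" where
  "bang_act f w = [w ! j. j \<leftarrow> [0..<cod_c f], \<not> const_coord f j]"

definition bang :: "'s set \<Rightarrow> 's list psh" where
  "bang \<Sigma> = \<lparr>cells = \<lambda>n. {w. length w = n \<and> set w \<subseteq> \<Sigma>}, act = bang_act\<rparr>"

section \<open>The left adjoint L_A (left Kan extension along box in A)\<close>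

definition LA_gen :: "cmap set \<Rightarrow> 'x psh \<Rightarrow> ((nat \<times> 'x \<times> cmap) \<times> (nat \<times> 'x \<times> cmap)) set" where
  "LA_gen A K = {((m, act K \<psi> x, \<phi>), (cod_c \<psi>, x, comp_c \<psi> \<phi>)) | m \<psi> x \<phi>.
      \<psi> \<in> box \<and> dom_c \<psi> = m \<and> x \<in> cells K (cod_c \<psi>) \<and> \<phi> \<in> A \<and> cod_c \<phi> = m}"

definition LA_rel :: "cmap set \<Rightarrow> 'x psh \<Rightarrow> ((nat \<times> 'x \<times> cmap) \<times> (nat \<times> 'x \<times> cmap)) set" where
  "LA_rel A K = (LA_gen A K \<union> (LA_gen A K)\<inverse>)\<^sup>*"

definition LA_elems :: "cmap set \<Rightarrow> 'x psh \<Rightarrow> nat \<Rightarrow> (nat \<times> 'x \<times> cmap) set" where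
  "LA_elems A K n = {(m, x, \<phi>). x \<in> cells K m \<and> \<phi> \<in> A \<and> cod_c \<phi> = m \<and> dom_c \<phi> = n}"

definition LA :: "cmap set \<Rightarrow> 'x psh \<Rightarrow> (nat \<times> 'x \<times> cmap) set psh" where
  "LA A K = \<lparr>cells = \<lambda>n. (\<lambda>t. LA_rel A K `` {t}) ` LA_elems A K n,
             act = \<lambda>f C. LA_rel A K `` ((\<lambda>(m, x, \<phi>). (m, x, comp_c \<phi> f)) ` C)\<rparr>"

section \<open>The reflection sh_A (identify p-cubes, p >= 2, with the same boundary)\<close>

inductive shrel :: "cmap set \<Rightarrow> 'x psh \<Rightarrow> nat \<Rightarrow> 'x \<Rightarrow> 'x \<Rightarrow> bool" for A X where
  sh_refl: "x \<in> cells X n \<Longrightarrow> shrel A X n x x"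
| sh_sym: "shrel A X n x y \<Longrightarrow> shrel A X n y x"
| sh_trans: "shrel A X n x y \<Longrightarrow> shrel A X n y z \<Longrightarrow> shrel A X n x z"
| sh_act: "shrel A X n x y \<Longrightarrow> f \<in> A \<Longrightarrow> cod_c f = n
             \<Longrightarrow> shrel A X (dom_c f) (act X f x) (act X f y)"
| sh_bnd: "2 \<le> p \<Longrightarrow> x \<in> cells X p \<Longrightarrow> y \<in> cells X p
             \<Longrightarrow> (\<And>f. f \<in> A \<Longrightarrow> cod_c f = p \<Longrightarrow> dom_c f < p
                     \<Longrightarrow> shrel A X (dom_c f) (act X f x) (act X f y))
             \<Longrightarrow> shrel A X p x y"

definition sh :: "cmap set \<Rightarrow> 'x psh \<Rightarrow> 'x set psh" where
  "sh A X = \<lparr>cells = \<lambda>n. (\<lambda>x. {y. shrel A X n x y}) ` cells X n,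
             act = \<lambda>f C. {z. \<exists>y \<in> C. shrel A X (dom_c f) (act X f y) z}\<rparr>"

text \<open>The base of labelled A-sets: sh_A L_A (!Sigma).\<close>
definition ShL :: "cmap set \<Rightarrow> 's set \<Rightarrow> (nat \<times> 's list \<times> cmap) set set psh" where
  "ShL A \<Sigma> = sh A (LA A (bang \<Sigma>))"

text \<open>Labelling of L_A(K) induced by a labelling lab of a precubical set K over !Sigma:
  L_A(K) -> L_A(!Sigma) -> sh_A L_A(!Sigma).\<close>
definition LA_lab :: "cmap set \<Rightarrow> 's set \<Rightarrow> (nat \<Rightarrow> 'x \<Rightarrow> 's list)
                      \<Rightarrow> nat \<Rightarrow> (nat \<times> 'x \<times> cmap) set \<Rightarrow> (nat \<times> 's list \<times> cmap) set set" where
  "LA_lab A \<Sigma> lab n C = {z. shrel A (LA A (bang \<Sigma>)) n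
       (LA_rel A (bang \<Sigma>) `` ((\<lambda>(m, x, \<phi>). (m, lab m x, \<phi>)) ` C)) z}"

definition box_cube :: "nat \<Rightarrow> cmap psh" where
  "box_cube n = \<lparr>cells = \<lambda>k. {\<phi> \<in> box. dom_c \<phi> = k \<and> cod_c \<phi> = n}, act = \<lambda>f \<phi>. comp_c \<phi> f\<rparr>"

definition box_lab :: "'s list \<Rightarrow> nat \<Rightarrow> cmap \<Rightarrow> 's list" where
  "box_lab a k \<phi> = bang_act \<phi> a"

text \<open>For a 1-dimensional labelled A-set Y (labels ly into S), the n-cubes of
  cosk_1 are pairs (u, s): s an n-cube of S and u a labelled map (A[n])_{<=1} -> Y
  over s.\<close>
definition cosk_cells :: "cmap set \<Rightarrow> 'y psh \<Rightarrow> (nat \<Rightarrow> 'y \<Rightarrow> 'l) \<Rightarrow> 'l psh \<Rightarrow> nat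
                           \<Rightarrow> ((cmap \<Rightarrow> 'y) \<times> 'l) set" where
  "cosk_cells A Y ly S n = {(u, s). s \<in> cells S n
     \<and> (\<forall>\<phi>. \<not> (\<phi> \<in> A \<and> cod_c \<phi> = n \<and> dom_c \<phi> \<le> 1) \<longrightarrow> u \<phi> = undefined)
     \<and> (\<forall>\<phi> \<in> A. cod_c \<phi> = n \<longrightarrow> dom_c \<phi> \<le> 1 \<longrightarrow>
           u \<phi> \<in> cells Y (dom_c \<phi>) \<and> ly (dom_c \<phi>) (u \<phi>) = act S \<phi> s)
     \<and> (\<forall>\<delta> \<in> A. \<forall>\<phi> \<in> A. dom_c \<delta> \<le> 1 \<longrightarrow> cod_c \<delta> = dom_c \<phi> \<longrightarrow> dom_c \<phi> \<le> 1 \<longrightarrow> cod_c \<phi> = n \<longrightarrow>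
           u (comp_c \<phi> \<delta>) = act Y \<delta> (u \<phi>))}"

definition cosk_act :: "cmap set \<Rightarrow> 'y psh \<Rightarrow> 'l psh \<Rightarrow> cmap \<Rightarrow> (cmap \<Rightarrow> 'y) \<times> 'l \<Rightarrow> (cmap \<Rightarrow> 'y) \<times> 'l" where
  "cosk_act A Y S f x = (\<lambda>\<phi>. if \<phi> \<in> A \<and> cod_c \<phi> = dom_c f \<and> dom_c \<phi> \<le> 1
                               then fst x (comp_c f \<phi>) else undefined,
                         act S f (snd x))"

definition cosk :: "cmap set \<Rightarrow> 'y psh \<Rightarrow> (nat \<Rightarrow> 'y \<Rightarrow> 'l) \<Rightarrow> 'l psh \<Rightarrow> ((cmap \<Rightarrow> 'y) \<times> 'l) psh" where
  "cosk A Y ly S = \<lparr>cells = cosk_cells A Y ly S, act = cosk_act A Y S\<rparr>"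

definition cosk_lab :: "nat \<Rightarrow> (cmap \<Rightarrow> 'y) \<times> 'l \<Rightarrow> 'l" where
  "cosk_lab n x = snd x"

definition first_occ :: "nat list \<Rightarrow> nat \<Rightarrow> nat" where
  "first_occ is i = (LEAST j. j < length is \<and> is ! j = i)"

text \<open>A map h : [n] -> [p] (given on vertices) is non-twisted.  Indices are 0-based.\<close>
definition non_twisted :: "nat \<Rightarrow> nat \<Rightarrow> (vert \<Rightarrow> vert) \<Rightarrow> bool" where
  "non_twisted n p h \<longleftrightarrow> (\<exists>\<psi> is. \<psi> \<in> box \<and> dom_c \<psi> = length is \<and> cod_c \<psi> = p
      \<and> set is = {0..<n}
      \<and> (\<forall>i. Suc i < n \<longrightarrow> first_occ is i < first_occ is (Suc i))
      \<and> (\<forall>v \<in> cube n. h v = fun_c \<psi> (map (\<lambda>i. v ! i) is)))"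

text \<open>Induced map on 0-cubes of an n-cube x of the coskeleton, using an
  identification idK of K_0 with the vertices of [p].\<close>
definition x0 :: "('y \<Rightarrow> vert) \<Rightarrow> nat \<Rightarrow> (cmap \<Rightarrow> 'y) \<times> 'l \<Rightarrow> vert \<Rightarrow> vert" where
  "x0 idK n x = (\<lambda>v. idK (fst x (mk_map 0 n (\<lambda>_. v))))"

definition COSK :: "'s set \<Rightarrow> 'y psh \<Rightarrow> (nat \<Rightarrow> 'y \<Rightarrow> 's list) \<Rightarrow> ('y \<Rightarrow> vert) \<Rightarrow> nat
                    \<Rightarrow> ((cmap \<Rightarrow> 'y) \<times> 's list) psh" where
  "COSK \<Sigma> K lK idK p = \<lparr>cells = \<lambda>n. {x \<in> cosk_cells box K lK (bang \<Sigma>) n.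
                                       n \<le> 1 \<or> non_twisted n p (x0 idK n x)},
                        act = cosk_act box K (bang \<Sigma>)\<rparr>"

text \<open>COSK^Sigma(box[a_1..a_n]_{<=1}); its 0-cubes (maps [0] -> [n]) are identified
  with vertices of [n].\<close>
definition COSK_box :: "'s set \<Rightarrow> 's list \<Rightarrow> ((cmap \<Rightarrow> cmap) \<times> 's list) psh" where
  "COSK_box \<Sigma> a = COSK \<Sigma> (trunc1 (box_cube (length a))) (box_lab a) (\<lambda>\<phi>. fun_c \<phi> []) (length a)"

end

theory Submission
  imports Defs
begin

lemma mk_simps[simp]: "dom_c (mk_map m n g) = m" "cod_c (mk_map m n g) = n"
  "fun_c (mk_map m n g) v = (if length v = m then g v else undefined)"
  by (auto simp: dom_c_def cod_c_def fun_c_def mk_map_def)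

lemma in_cube[simp]: "v \<in> cube n \<longleftrightarrow> length v = n" by (simp add: cube_def)

lemma mk_map_eq: "(\<And>v. length v = m \<Longrightarrow> g v = g' v) \<Longrightarrow> mk_map m n g = mk_map m n g'"
  by (auto simp: mk_map_def)

lemma wf_mapI: "(\<And>v. length v = m \<Longrightarrow> length (g v) = n) \<Longrightarrow> wf_map (mk_map m n g)"
  by (auto simp: wf_map_def mk_map_def dom_c_def cod_c_def fun_c_def)

lemma wf_len: "wf_map f \<Longrightarrow> length v = dom_c f \<Longrightarrow> length (fun_c f v) = cod_c f"
  by (auto simp: wf_map_def)

lemma wf_eq: "wf_map f \<Longrightarrow> wf_map g \<Longrightarrow> dom_c f = dom_c g \<Longrightarrow> cod_c f = cod_c g
  \<Longrightarrow> (\<And>v. length v = dom_c f \<Longrightarrow> fun_c f v = fun_c g v) \<Longrightarrow> f = g"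
  unfolding wf_map_def by (metis mk_map_eq)

lemma wf_mk: "wf_map f \<Longrightarrow> mk_map (dom_c f) (cod_c f) (fun_c f) = f"
  by (simp add: wf_map_def)

lemma comp_simps[simp]: "dom_c (comp_c g f) = dom_c f" "cod_c (comp_c g f) = cod_c g"
  by (auto simp: comp_c_def)

lemma comp_fun: "length v = dom_c f \<Longrightarrow> fun_c (comp_c g f) v = fun_c g (fun_c f v)"
  by (simp add: comp_c_def)

lemma wf_comp: "wf_map g \<Longrightarrow> wf_map f \<Longrightarrow> dom_c g = cod_c f \<Longrightarrow> wf_map (comp_c g f)"
  unfolding comp_c_def by (rule wf_mapI) (simp add: wf_len)

lemma comp_assoc: "wf_map f \<Longrightarrow> dom_c g = cod_c f \<Longrightarrow> comp_c h (comp_c g f) = comp_c (comp_c h g) f"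
  unfolding comp_c_def by (simp, rule mk_map_eq, simp add: wf_len)

lemma idc_simps[simp]: "dom_c (idc n) = n" "cod_c (idc n) = n" by (auto simp: idc_def)
lemma idc_fun: "length v = n \<Longrightarrow> fun_c (idc n) v = v" by (simp add: idc_def)
lemma wf_idc: "wf_map (idc n)" unfolding idc_def by (rule wf_mapI) simp

lemma comp_idc_r: "wf_map g \<Longrightarrow> dom_c g = n \<Longrightarrow> comp_c g (idc n) = g"
  by (rule wf_eq) (auto simp: wf_comp wf_idc comp_fun idc_fun)
lemma comp_idc_l: "wf_map f \<Longrightarrow> cod_c f = n \<Longrightarrow> comp_c (idc n) f = f"
  by (rule wf_eq) (auto simp: wf_comp wf_idc comp_fun idc_fun wf_len)

definition vtx :: "nat \<Rightarrow> vert \<Rightarrow> cmap" where "vtx n v = mk_map 0 n (\<lambda>_. v)"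

lemma vtx_simps[simp]: "dom_c (vtx n v) = 0" "cod_c (vtx n v) = n" by (auto simp: vtx_def)
lemma vtx_fun[simp]: "fun_c (vtx n v) [] = v" by (simp add: vtx_def)
lemma wf_vtx: "length v = n \<Longrightarrow> wf_map (vtx n v)" unfolding vtx_def by (rule wf_mapI) simp

lemma dom0_vtx: "wf_map f \<Longrightarrow> dom_c f = 0 \<Longrightarrow> f = vtx (cod_c f) (fun_c f [])"
  by (rule wf_eq) (auto simp: wf_vtx wf_len)

lemma comp_vtx: "wf_map f \<Longrightarrow> length v = dom_c f \<Longrightarrow> comp_c f (vtx (dom_c f) v) = vtx (cod_c f) (fun_c f v)"
  by (rule wf_eq) (auto simp: wf_comp wf_vtx wf_len comp_fun)


definition ins :: "nat \<Rightarrow> bool \<Rightarrow> vert \<Rightarrow> vert" where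
  "ins k a v = take k v @ a # drop k v"

lemma face_simps[simp]: "dom_c (face n i a) = n - 1" "cod_c (face n i a) = n"
  by (auto simp: face_def)
lemma face_fun: "length v = n - 1 \<Longrightarrow> fun_c (face n i a) v = ins (i - 1) a v"
  by (simp add: face_def ins_def)
lemma len_ins[simp]: "length (ins k a v) = Suc (length v)" by (simp add: ins_def)

lemma dist_Nil[simp]: "dist_v [] w = 0" "dist_v v [] = 0" by (auto simp: dist_v_def)
lemma dist_Cons[simp]: "dist_v (a#x) (b#y) = (if a \<noteq> b then 1 else 0) + dist_v x y"
  by (simp add: dist_v_def)
lemma dist_append: "length x = length y \<Longrightarrow> dist_v (x @ x') (y @ y') = dist_v x y + dist_v x' y'"
  by (simp add: dist_v_def)
lemma dist0: "length x = length y \<Longrightarrow> dist_v x y = 0 \<longleftrightarrow> x = y"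
  by (induction x y rule: list_induct2) auto
lemma dist_sym: "dist_v x y = dist_v y x"
proof (induction x arbitrary: y)
  case Nil show ?case by simp
next
  case (Cons a x) show ?case by (cases y) (auto simp: Cons)
qed

lemma leq_Nil[simp]: "leq_v [] [] = True" by (simp add: leq_v_def)
lemma leq_Cons[simp]: "leq_v (a#x) (b#y) = (a \<le> b \<and> leq_v x y)" by (simp add: leq_v_def)
lemma leq_len: "leq_v x y \<Longrightarrow> length x = length y" by (simp add: leq_v_def list_all2_lengthD)
lemma leq_append: "length x = length y \<Longrightarrow> leq_v (x @ x') (y @ y') = (leq_v x y \<and> leq_v x' y')"
  by (simp add: leq_v_def list_all2_append)
lemma leq_trans: "leq_v x y \<Longrightarrow> leq_v y z \<Longrightarrow> leq_v x z"
  unfolding leq_v_def by (rule list_all2_trans) auto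
lemma leq_refl: "leq_v x x" unfolding leq_v_def by (simp add: list_all2_refl)

lemma ins_dist: "length v = length w \<Longrightarrow> k \<le> length v \<Longrightarrow> dist_v (ins k a v) (ins k a w) = dist_v v w"
proof -
  assume h: "length v = length w" "k \<le> length v"
  have "dist_v v w = dist_v (take k v @ drop k v) (take k w @ drop k w)" by simp
  also have "\<dots> = dist_v (take k v) (take k w) + dist_v (drop k v) (drop k w)"
    by (rule dist_append) (use h in simp)
  finally show ?thesis using h by (simp add: ins_def dist_append)
qed

lemma ins_leq: "length v = length w \<Longrightarrow> k \<le> length v \<Longrightarrow> leq_v (ins k a v) (ins k a w) = leq_v v w"
proof -
  assume h: "length v = length w" "k \<le> length v"
  have "leq_v v w = leq_v (take k v @ drop k v) (take k w @ drop k w)" by simp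
  also have "\<dots> = (leq_v (take k v) (take k w) \<and> leq_v (drop k v) (drop k w))"
    by (rule leq_append) (use h in simp)
  finally show ?thesis using h by (simp add: ins_def leq_append)
qed

definition good :: "cmap \<Rightarrow> bool" where
  "good f \<longleftrightarrow> wf_map f \<and> (\<forall>x y :: vert. length x = dom_c f \<longrightarrow> length y = dom_c f \<longrightarrow>
      leq_v (fun_c f x) (fun_c f y) = leq_v x y \<and> dist_v (fun_c f x) (fun_c f y) = dist_v x y)"

lemma box_good: "f \<in> box \<Longrightarrow> good f"
proof (induction rule: box.induct)
  case (box_id n) then show ?case by (simp add: good_def wf_idc idc_fun)
next
  case (box_face f i n a)
  then have wf: "wf_map f" by (simp add: good_def)
  have wfF: "wf_map (face n i a)" unfolding face_def
    by (rule wf_mapI) (use box_face in auto)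
  show ?case unfolding good_def
  proof (intro conjI allI impI)
    show "wf_map (comp_c (face n i a) f)" using wf wfF box_face by (simp add: wf_comp)
    fix x y :: vert assume "length x = dom_c (comp_c (face n i a) f)" "length y = dom_c (comp_c (face n i a) f)"
    then have l: "length x = dom_c f" "length y = dom_c f" by auto
    have lx: "length (fun_c f x) = n - 1" "length (fun_c f y) = n - 1" using l wf box_face by (auto simp: wf_len)
    have k: "i - 1 \<le> n - 1" using box_face by auto
    show "leq_v (fun_c (comp_c (face n i a) f) x) (fun_c (comp_c (face n i a) f) y) = leq_v x y"
      using l lx k box_face.IH by (simp add: comp_fun face_fun ins_leq ins_dist good_def)
    show "dist_v (fun_c (comp_c (face n i a) f) x) (fun_c (comp_c (face n i a) f) y) = dist_v x y"
      using l lx k box_face.IH by (simp add: comp_fun face_fun ins_leq ins_dist good_def)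
  qed
qed

lemma box_wf: "f \<in> box \<Longrightarrow> wf_map f" using box_good good_def by blast

lemma good_adj: "good f \<Longrightarrow> adj_pres f"
proof -
  assume g: "good f"
  have wf: "wf_map f" using g good_def by blast
  have "less_v (fun_c f x) (fun_c f y)" if "length x = dom_c f" "length y = dom_c f" "less_v x y" for x y
  proof -
    have e: "leq_v (fun_c f x) (fun_c f y) = leq_v x y" "dist_v (fun_c f x) (fun_c f y) = dist_v x y"
      using g that unfolding good_def by blast+
    have "x \<noteq> y" using that(3) less_v_def by blast
    then have "dist_v x y \<noteq> 0" using dist0[of x y] that by simp
    moreover have "dist_v z z = 0" for z by (induction z) auto
    ultimately have "fun_c f x \<noteq> fun_c f y" using e(2) by metis
    then show ?thesis using that(3) e(1) less_v_def by blast
  qed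
  moreover have "dist_v (fun_c f x) (fun_c f y) = 1" if "length x = dom_c f" "length y = dom_c f" "dist_v x y = 1" for x y
    using g that unfolding good_def by simp
  ultimately show ?thesis using wf unfolding adj_pres_def by simp
qed

lemma box_adj: "f \<in> box \<Longrightarrow> adj_pres f" using box_good good_adj by blast

lemma adj_comp: "adj_pres g \<Longrightarrow> adj_pres f \<Longrightarrow> dom_c g = cod_c f \<Longrightarrow> adj_pres (comp_c g f)"
  unfolding adj_pres_def by (auto simp: wf_comp comp_fun wf_len)

lemma box_comp: "g \<in> box \<Longrightarrow> f \<in> box \<Longrightarrow> dom_c g = cod_c f \<Longrightarrow> comp_c g f \<in> box"
proof (induction arbitrary: f rule: box.induct)
  case (box_id n) then show ?case by (simp add: comp_idc_l box_wf)
next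
  case (box_face g i n a)
  have "comp_c (comp_c (face n i a) g) f = comp_c (face n i a) (comp_c g f)"
    using box_face by (simp add: comp_assoc box_wf)
  moreover have "comp_c g f \<in> box" using box_face.IH box_face.prems by simp
  moreover have "cod_c (comp_c g f) = n - 1" using box_face by simp
  ultimately show ?case using box_face.hyps box.box_face by metis
qed

lemma cat_hat: "cat_of_cubes hat_box"
  unfolding cat_of_cubes_def hat_box_def using box_adj adj_comp by blast

lemma wf_face: "1 \<le> i \<Longrightarrow> i \<le> n \<Longrightarrow> wf_map (face n i a)"
  unfolding face_def by (rule wf_mapI) auto

lemma vtx_box: "vtx (length v) v \<in> box"
proof (induction v)
  case Nil
  have "vtx 0 [] = idc 0" by (rule wf_eq) (auto simp: wf_vtx wf_idc idc_fun)
  then show ?case by (simp add: box.box_id)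
next
  case (Cons c v)
  have "comp_c (face (Suc (length v)) 1 c) (vtx (length v) v) = vtx (length (c#v)) (c#v)"
    by (rule wf_eq) (auto simp: wf_vtx wf_comp wf_face comp_fun face_fun ins_def)
  then show ?case using Cons box.box_face[of "vtx (length v) v" 1 "Suc (length v)" c] by auto
qed

definition edge :: "vert \<Rightarrow> vert \<Rightarrow> cmap" where
  "edge l r = mk_map 1 (length l + 1 + length r) (\<lambda>v. l @ hd v # r)"

lemma edge_simps[simp]: "dom_c (edge l r) = 1" "cod_c (edge l r) = length l + 1 + length r"
  by (auto simp: edge_def)
lemma edge_fun: "length v = 1 \<Longrightarrow> fun_c (edge l r) v = l @ hd v # r" by (simp add: edge_def)
lemma wf_edge: "wf_map (edge l r)" unfolding edge_def by (rule wf_mapI) simp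


lemma edge_box: "edge l r \<in> box"
proof (induction l)
  case Nil
  show ?case
  proof (induction r)
    case Nil
    have "edge [] [] = idc 1" by (rule wf_eq) (auto simp: wf_edge wf_idc idc_fun edge_fun length_Suc_conv)
    then show ?case by (simp add: box.box_id)
  next
    case (Cons c r)
    have "comp_c (face (length r + 2) 2 c) (edge [] r) = edge [] (c#r)"
      by (rule wf_eq) (auto simp: wf_edge wf_comp wf_face comp_fun face_fun ins_def edge_fun)
    then show ?case using Cons box.box_face[of "edge [] r" 2 "length r + 2" c] by auto
  qed
next
  case (Cons c l)
  have "comp_c (face (length l + length r + 2) 1 c) (edge l r) = edge (c#l) r"
    by (rule wf_eq) (auto simp: wf_edge wf_comp wf_face comp_fun face_fun ins_def edge_fun)
  then show ?case using Cons box.box_face[of "edge l r" 1 "length l + length r + 2" c] by auto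
qed

lemma dist1: "length x = length y \<Longrightarrow> dist_v x y = 1 \<Longrightarrow>
   \<exists>l r c. x = l @ c # r \<and> y = l @ (\<not>c) # r"
proof (induction x y rule: list_induct2)
  case Nil then show ?case by simp
next
  case (Cons a x b y)
  show ?case
  proof (cases "a = b")
    case True
    then have "dist_v x y = 1" using Cons.prems by simp
    then obtain l r c where lr: "x = l @ c # r" "y = l @ (\<not>c) # r" using Cons.IH by blast
    have "a # x = (a # l) @ c # r \<and> b # y = (a # l) @ (\<not>c) # r" using lr True by simp
    then show ?thesis by blast
  next
    case False
    then have "dist_v x y = 0" using Cons.prems by simp
    then have "x = y" using dist0[OF Cons.hyps] by blast
    then have "a # x = [] @ a # x \<and> b # y = [] @ (\<not>a) # x" using False by simp
    then show ?thesis by blast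
  qed
qed

lemma cube1: "length (v::vert) = 1 \<longleftrightarrow> v = [False] \<or> v = [True]"
  by (auto simp: length_Suc_conv)

lemma adj_dom1: "adj_pres f \<Longrightarrow> dom_c f = 1 \<Longrightarrow>
   \<exists>l r. f = edge l r \<and> fun_c f [False] = l @ False # r \<and> fun_c f [True] = l @ True # r"
proof -
  assume a: "adj_pres f" "dom_c f = 1"
  have wf: "wf_map f" using a adj_pres_def by auto
  have "less_v [False] [True]" by (simp add: less_v_def)
  then have le: "less_v (fun_c f [False]) (fun_c f [True])" using a by (auto simp: adj_pres_def)
  have d: "dist_v (fun_c f [False]) (fun_c f [True]) = 1" using a by (auto simp: adj_pres_def)
  have ll: "length (fun_c f [False]) = length (fun_c f [True])" using wf a by (simp add: wf_len)
  obtain l r c where lr: "fun_c f [False] = l @ c # r" "fun_c f [True] = l @ (\<not>c) # r"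
    using dist1[OF ll d] by blast
  have "c = False" using le lr by (auto simp: less_v_def leq_append)
  then have lr2: "fun_c f [False] = l @ False # r" "fun_c f [True] = l @ True # r" using lr by auto
  have "f = edge l r"
  proof (rule wf_eq)
    have "length (fun_c f [False]) = cod_c f" using wf a by (intro wf_len) auto
    then show "cod_c f = cod_c (edge l r)" using lr2 by simp
    fix v :: vert assume "length v = dom_c f"
    then have "v = [False] \<or> v = [True]" using a cube1 by auto
    then show "fun_c f v = fun_c (edge l r) v" using lr2 by (auto simp: edge_fun)
  qed (use wf a wf_edge in auto)
  then show ?thesis using lr2 by blast
qed

lemma adj_low_box: "adj_pres f \<Longrightarrow> dom_c f \<le> 1 \<Longrightarrow> f \<in> box"
proof -
  assume a: "adj_pres f" "dom_c f \<le> 1"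
  have wf: "wf_map f" using a adj_pres_def by auto
  show ?thesis
  proof (cases "dom_c f = 0")
    case True
    then have "f = vtx (cod_c f) (fun_c f [])" using dom0_vtx wf by blast
    moreover have "length (fun_c f []) = cod_c f" using wf True by (simp add: wf_len)
    ultimately show ?thesis using vtx_box by metis
  next
    case False
    then have "dom_c f = 1" using a by simp
    then obtain l r where "f = edge l r" using adj_dom1[OF a(1)] by blast
    then show ?thesis using edge_box by simp
  qed
qed


lemma rtrancl_map_inv:
  assumes "(a, b) \<in> R\<^sup>*" "P a"
    and "\<And>a b. P a \<Longrightarrow> (a, b) \<in> R \<Longrightarrow> P b \<and> (g a, g b) \<in> S\<^sup>*"
  shows "P b \<and> (g a, g b) \<in> S\<^sup>*"
  using assms(1)
proof (induction rule: rtrancl_induct)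
  case base then show ?case using assms(2) by simp
next
  case (step y z) then show ?case using assms(3)[of y z] by (meson rtrancl_trans)
qed

abbreviation cls :: "cmap set \<Rightarrow> 'x psh \<Rightarrow> nat \<times> 'x \<times> cmap \<Rightarrow> (nat \<times> 'x \<times> cmap) set" where
  "cls A K t \<equiv> LA_rel A K `` {t}"

lemma LA_rel_sym: "(a, b) \<in> LA_rel A K \<Longrightarrow> (b, a) \<in> LA_rel A K"
proof -
  assume "(a, b) \<in> LA_rel A K"
  then have "(b, a) \<in> ((LA_gen A K \<union> (LA_gen A K)\<inverse>)\<inverse>)\<^sup>*"
    unfolding LA_rel_def by (simp add: rtrancl_converse)
  moreover have "(LA_gen A K \<union> (LA_gen A K)\<inverse>)\<inverse> = LA_gen A K \<union> (LA_gen A K)\<inverse>" by auto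
  ultimately show ?thesis unfolding LA_rel_def by simp
qed

lemma LA_rel_trans: "(a, b) \<in> LA_rel A K \<Longrightarrow> (b, c) \<in> LA_rel A K \<Longrightarrow> (a, c) \<in> LA_rel A K"
  unfolding LA_rel_def by (rule rtrancl_trans)

lemma LA_rel_refl: "(a, a) \<in> LA_rel A K" unfolding LA_rel_def by simp

lemma cls_eq: "cls A K t = cls A K t' \<longleftrightarrow> (t, t') \<in> LA_rel A K"
proof
  assume "cls A K t = cls A K t'"
  moreover have "t' \<in> cls A K t'" using LA_rel_refl by blast
  ultimately show "(t, t') \<in> LA_rel A K" by blast
next
  assume h: "(t, t') \<in> LA_rel A K"
  show "cls A K t = cls A K t'"
  proof (rule set_eqI)
    fix z
    show "z \<in> cls A K t \<longleftrightarrow> z \<in> cls A K t'"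
      using h LA_rel_sym[OF h] LA_rel_trans[where a=t' and b=t and c=z] LA_rel_trans[where a=t and b=t' and c=z] by blast
  qed
qed

lemma gen_step: "(a, b) \<in> LA_gen A K \<Longrightarrow> (a, b) \<in> LA_rel A K"
  unfolding LA_rel_def by auto

lemma cells_LA: "cells (LA A K) n = cls A K ` LA_elems A K n" by (simp add: LA_def)

lemma cat_wf: "cat_of_cubes A \<Longrightarrow> f \<in> A \<Longrightarrow> wf_map f"
  by (auto simp: cat_of_cubes_def adj_pres_def)
lemma cat_box: "cat_of_cubes A \<Longrightarrow> f \<in> box \<Longrightarrow> f \<in> A"
  by (auto simp: cat_of_cubes_def)
lemma cat_comp: "cat_of_cubes A \<Longrightarrow> f \<in> A \<Longrightarrow> g \<in> A \<Longrightarrow> dom_c g = cod_c f \<Longrightarrow> comp_c g f \<in> A"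
  by (auto simp: cat_of_cubes_def)
lemma cat_adj: "cat_of_cubes A \<Longrightarrow> f \<in> A \<Longrightarrow> adj_pres f"
  by (auto simp: cat_of_cubes_def)
lemma cat_idc: "cat_of_cubes A \<Longrightarrow> idc n \<in> A"
  by (auto simp: cat_of_cubes_def intro: box.box_id)

lemma genI: "\<psi> \<in> box \<Longrightarrow> dom_c \<psi> = m \<Longrightarrow> x \<in> cells K (cod_c \<psi>) \<Longrightarrow> \<phi> \<in> A \<Longrightarrow> cod_c \<phi> = m \<Longrightarrow>
  ((m, act K \<psi> x, \<phi>), (cod_c \<psi>, x, comp_c \<psi> \<phi>)) \<in> LA_gen A K"
  unfolding LA_gen_def by blast

lemma genE: "(a, b) \<in> LA_gen A K \<Longrightarrow> \<exists>m \<psi> x \<phi>. a = (m, act K \<psi> x, \<phi>) \<and> b = (cod_c \<psi>, x, comp_c \<psi> \<phi>)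
  \<and> \<psi> \<in> box \<and> dom_c \<psi> = m \<and> x \<in> cells K (cod_c \<psi>) \<and> \<phi> \<in> A \<and> cod_c \<phi> = m"
  unfolding LA_gen_def by blast

definition rmap :: "(nat \<Rightarrow> 'x \<Rightarrow> 'y) \<Rightarrow> nat \<times> 'x \<times> cmap \<Rightarrow> nat \<times> 'y \<times> cmap" where
  "rmap G t = (case t of (m, x, \<phi>) \<Rightarrow> (m, G m x, \<phi>))"

lemma rmap_simp[simp]: "rmap G (m, x, \<phi>) = (m, G m x, \<phi>)" by (simp add: rmap_def)

definition natural :: "'x psh \<Rightarrow> 'y psh \<Rightarrow> (nat \<Rightarrow> 'x \<Rightarrow> 'y) \<Rightarrow> bool" where
  "natural K K' G \<longleftrightarrow> (\<forall>n. \<forall>x\<in>cells K n. G n x \<in> cells K' n)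
     \<and> (\<forall>\<psi>\<in>box. \<forall>x\<in>cells K (cod_c \<psi>). G (dom_c \<psi>) (act K \<psi> x) = act K' \<psi> (G (cod_c \<psi>) x))"

lemma natural_rel: "natural K K' G \<Longrightarrow> (a, b) \<in> LA_rel A K \<Longrightarrow> (rmap G a, rmap G b) \<in> LA_rel A K'"
proof -
  assume N: "natural K K' G" and ab: "(a, b) \<in> LA_rel A K"
  have g: "(rmap G a, rmap G b) \<in> LA_gen A K'" if "(a, b) \<in> LA_gen A K" for a b
  proof -
    from genE[OF that] obtain m \<psi> x \<phi> where e: "a = (m, act K \<psi> x, \<phi>)" "b = (cod_c \<psi>, x, comp_c \<psi> \<phi>)"
      "\<psi> \<in> box" "dom_c \<psi> = m" "x \<in> cells K (cod_c \<psi>)" "\<phi> \<in> A" "cod_c \<phi> = m" by blast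
    have "G m (act K \<psi> x) = act K' \<psi> (G (cod_c \<psi>) x)" "G (cod_c \<psi>) x \<in> cells K' (cod_c \<psi>)"
      using N e unfolding natural_def by auto
    then show ?thesis using e genI[of \<psi> m "G (cod_c \<psi>) x" K' \<phi> A] by simp
  qed
  have "True \<and> (rmap G a, rmap G b) \<in> (LA_gen A K' \<union> (LA_gen A K')\<inverse>)\<^sup>*"
    apply (rule rtrancl_map_inv[where P="\<lambda>_. True", OF ab[unfolded LA_rel_def]])
    using g by blast+
  then show ?thesis unfolding LA_rel_def by simp
qed

definition LAmap :: "cmap set \<Rightarrow> 'y psh \<Rightarrow> (nat \<Rightarrow> 'x \<Rightarrow> 'y) \<Rightarrow> (nat \<times> 'x \<times> cmap) set \<Rightarrow> (nat \<times> 'y \<times> cmap) set" where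
  "LAmap A K' G C = LA_rel A K' `` (rmap G ` C)"

lemma LAmap_cls: "natural K K' G \<Longrightarrow> LAmap A K' G (cls A K t) = cls A K' (rmap G t)"
proof (rule set_eqI)
  assume N: "natural K K' G"
  fix z
  show "z \<in> LAmap A K' G (cls A K t) \<longleftrightarrow> z \<in> cls A K' (rmap G t)"
  proof
    assume "z \<in> LAmap A K' G (cls A K t)"
    then obtain b where b: "(t, b) \<in> LA_rel A K" "(rmap G b, z) \<in> LA_rel A K'"
      unfolding LAmap_def by blast
    then show "z \<in> cls A K' (rmap G t)" using natural_rel[OF N b(1)] LA_rel_trans by blast
  next
    assume "z \<in> cls A K' (rmap G t)"
    moreover have "rmap G t \<in> rmap G ` cls A K t" using LA_rel_refl by blast
    ultimately show "z \<in> LAmap A K' G (cls A K t)" unfolding LAmap_def by blast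
  qed
qed

lemma LA_lab_LAmap: "LA_lab A \<Sigma> lab n C = {z. shrel A (LA A (bang \<Sigma>)) n (LAmap A (bang \<Sigma>) lab C) z}"
  by (simp add: LA_lab_def LAmap_def rmap_def)

definition ract :: "cmap \<Rightarrow> nat \<times> 'x \<times> cmap \<Rightarrow> nat \<times> 'x \<times> cmap" where
  "ract f t = (case t of (m, x, \<phi>) \<Rightarrow> (m, x, comp_c \<phi> f))"
lemma ract_simp[simp]: "ract f (m, x, \<phi>) = (m, x, comp_c \<phi> f)" by (simp add: ract_def)

lemma act_LA: "act (LA A K) f C = LA_rel A K `` (ract f ` C)"
  by (simp add: LA_def ract_def)

definition mapof :: "nat \<times> 'x \<times> cmap \<Rightarrow> cmap" where "mapof t = snd (snd t)"

lemma ract_rel: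
  assumes A: "cat_of_cubes A" and f: "f \<in> A" and ab: "(a, b) \<in> LA_rel A K"
    and a: "mapof a \<in> A" "dom_c (mapof a) = cod_c f"
  shows "(ract f a, ract f b) \<in> LA_rel A K"
proof -
  let ?P = "\<lambda>t. mapof t \<in> A \<and> dom_c (mapof t) = cod_c f"
  have step: "?P b' \<and> (ract f a', ract f b') \<in> (LA_gen A K \<union> (LA_gen A K)\<inverse>)\<^sup>*"
    if "?P a'" "(a', b') \<in> LA_gen A K \<union> (LA_gen A K)\<inverse>" for a' b'
  proof -
    have g: "(ract f a'', ract f b'') \<in> LA_gen A K \<and> mapof a'' \<in> A \<and> mapof b'' \<in> A
             \<and> dom_c (mapof a'') = dom_c (mapof b'')"
      if "(a'', b'') \<in> LA_gen A K" "dom_c (mapof a'') = cod_c f \<or> dom_c (mapof b'') = cod_c f" for a'' b''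
    proof -
      from genE[OF that(1)] obtain m \<psi> x \<phi> where e: "a'' = (m, act K \<psi> x, \<phi>)" "b'' = (cod_c \<psi>, x, comp_c \<psi> \<phi>)"
        "\<psi> \<in> box" "dom_c \<psi> = m" "x \<in> cells K (cod_c \<psi>)" "\<phi> \<in> A" "cod_c \<phi> = m"
        by blast
      have df: "dom_c \<phi> = cod_c f" using that e by (auto simp: mapof_def)
      have wff: "wf_map f" using A f cat_wf by blast
      have "comp_c (comp_c \<psi> \<phi>) f = comp_c \<psi> (comp_c \<phi> f)"
        using comp_assoc[OF wff, of \<phi> \<psi>] df e by simp
      moreover have "comp_c \<phi> f \<in> A" using cat_comp[OF A f e(6)] df by simp
      moreover have "comp_c \<psi> \<phi> \<in> A" using cat_comp[OF A e(6) cat_box[OF A e(3)]] e by simp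
      moreover have "(ract f a'', ract f b'') = ((m, act K \<psi> x, comp_c \<phi> f), (cod_c \<psi>, x, comp_c \<psi> (comp_c \<phi> f)))"
        using e calculation(1) by simp
      moreover have "dom_c (comp_c \<psi> \<phi>) = dom_c \<phi>" by simp
      ultimately show ?thesis using e genI[of \<psi> m x K "comp_c \<phi> f" A] by (simp add: mapof_def)
    qed
    from that(2) show ?thesis
    proof
      assume "(a', b') \<in> LA_gen A K"
      then show ?thesis using g[of a' b'] that(1) by auto
    next
      assume "(a', b') \<in> (LA_gen A K)\<inverse>"
      then have "(b', a') \<in> LA_gen A K" by simp
      then show ?thesis using g[of b' a'] that(1) by auto
    qed
  qed
  show ?thesis using rtrancl_map_inv[of a b _ ?P, OF ab[unfolded LA_rel_def]] a step
    unfolding LA_rel_def by blast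
qed

lemma act_cls:
  assumes A: "cat_of_cubes A" and f: "f \<in> A" and t: "mapof t \<in> A" "dom_c (mapof t) = cod_c f"
  shows "act (LA A K) f (cls A K t) = cls A K (ract f t)"
proof (rule set_eqI)
  fix z
  show "z \<in> act (LA A K) f (cls A K t) \<longleftrightarrow> z \<in> cls A K (ract f t)"
  proof
    assume "z \<in> act (LA A K) f (cls A K t)"
    then obtain b where b: "(t, b) \<in> LA_rel A K" "(ract f b, z) \<in> LA_rel A K"
      unfolding act_LA by blast
    then show "z \<in> cls A K (ract f t)" using ract_rel[OF A f b(1) t] LA_rel_trans by blast
  next
    assume "z \<in> cls A K (ract f t)"
    moreover have "ract f t \<in> ract f ` cls A K t" using LA_rel_refl by blast
    ultimately show "z \<in> act (LA A K) f (cls A K t)" unfolding act_LA by blast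
  qed
qed

lemma elems_mapof: "t \<in> LA_elems A K n \<Longrightarrow> mapof t \<in> A \<and> dom_c (mapof t) = n"
  by (auto simp: LA_elems_def mapof_def)

lemma act_cls_elems:
  "cat_of_cubes A \<Longrightarrow> f \<in> A \<Longrightarrow> t \<in> LA_elems A K (cod_c f) \<Longrightarrow>
   act (LA A K) f (cls A K t) = cls A K (ract f t) \<and> ract f t \<in> LA_elems A K (dom_c f)"
proof -
  assume A: "cat_of_cubes A" and f: "f \<in> A" and t: "t \<in> LA_elems A K (cod_c f)"
  obtain m x \<phi> where tt: "t = (m, x, \<phi>)" by (cases t)
  from t tt have h: "x \<in> cells K m" "\<phi> \<in> A" "cod_c \<phi> = m" "dom_c \<phi> = cod_c f"
    by (auto simp: LA_elems_def)
  have "act (LA A K) f (cls A K t) = cls A K (ract f t)"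
    by (rule act_cls[OF A f]) (use h tt in \<open>auto simp: mapof_def\<close>)
  moreover have "ract f t \<in> LA_elems A K (dom_c f)"
    using h tt cat_comp[OF A f h(2)] by (simp add: LA_elems_def)
  ultimately show ?thesis by simp
qed

lemma LA_closed: "cat_of_cubes A \<Longrightarrow> f \<in> A \<Longrightarrow> C \<in> cells (LA A K) (cod_c f) \<Longrightarrow>
   act (LA A K) f C \<in> cells (LA A K) (dom_c f)"
  using act_cls_elems[of A f _ K] unfolding cells_LA by blast

lemma LA_funct: "cat_of_cubes A \<Longrightarrow> f \<in> A \<Longrightarrow> g \<in> A \<Longrightarrow> dom_c f = cod_c g \<Longrightarrow>
   C \<in> cells (LA A K) (cod_c f) \<Longrightarrow> act (LA A K) g (act (LA A K) f C) = act (LA A K) (comp_c f g) C"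
proof -
  assume A: "cat_of_cubes A" and f: "f \<in> A" and g: "g \<in> A" and d: "dom_c f = cod_c g"
    and C: "C \<in> cells (LA A K) (cod_c f)"
  obtain t where t: "t \<in> LA_elems A K (cod_c f)" "C = cls A K t" using C cells_LA by blast
  obtain m x \<phi> where tt: "t = (m, x, \<phi>)" by (cases t) auto
  have fg: "comp_c f g \<in> A" using cat_comp[OF A g f] d by simp
  have e1: "act (LA A K) f C = cls A K (ract f t)" "ract f t \<in> LA_elems A K (dom_c f)"
    using act_cls_elems[OF A f t(1)] t(2) by simp_all
  have e1': "ract f t \<in> LA_elems A K (cod_c g)" using e1(2) d by simp
  have e2: "act (LA A K) g (cls A K (ract f t)) = cls A K (ract g (ract f t))"
    using conjunct1[OF act_cls_elems[OF A g e1']] .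
  have t': "t \<in> LA_elems A K (cod_c (comp_c f g))" using t(1) by simp
  have e3: "act (LA A K) (comp_c f g) C = cls A K (ract (comp_c f g) t)"
    using conjunct1[OF act_cls_elems[OF A fg t']] t(2) by simp
  have "dom_c \<phi> = cod_c f" using t(1) tt by (simp add: LA_elems_def)
  then have "ract g (ract f t) = ract (comp_c f g) t"
    using tt comp_assoc[of g f \<phi>] cat_wf[OF A g] d by simp
  then show ?thesis using e1 e2 e3 by simp
qed

lemma LA_idc: "cat_of_cubes A \<Longrightarrow> C \<in> cells (LA A K) n \<Longrightarrow> act (LA A K) (idc n) C = C"
proof -
  assume A: "cat_of_cubes A" and C: "C \<in> cells (LA A K) n"
  obtain t where t: "t \<in> LA_elems A K n" "C = cls A K t" using C cells_LA by blast
  have t': "t \<in> LA_elems A K (cod_c (idc n))" using t(1) by simp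
  have "act (LA A K) (idc n) C = cls A K (ract (idc n) t)"
    using conjunct1[OF act_cls_elems[OF A cat_idc[OF A] t']] t(2) by simp
  moreover have "ract (idc n) t = t" using t cat_wf[OF A]
    by (auto simp: LA_elems_def comp_idc_r)
  ultimately show ?thesis using t by simp
qed

abbreviation shc :: "cmap set \<Rightarrow> 'x psh \<Rightarrow> nat \<Rightarrow> 'x \<Rightarrow> 'x set" where
  "shc A X n x \<equiv> {y. shrel A X n x y}"

definition closed :: "cmap set \<Rightarrow> 'x psh \<Rightarrow> bool" where
  "closed A X \<longleftrightarrow> (\<forall>f\<in>A. \<forall>x\<in>cells X (cod_c f). act X f x \<in> cells X (dom_c f))"

lemma shrel_cells: "shrel A X n x y \<Longrightarrow> closed A X \<Longrightarrow> x \<in> cells X n \<and> y \<in> cells X n"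
  by (induction rule: shrel.induct) (auto simp: closed_def)

lemma shc_eq:
  assumes x: "x \<in> cells X n"
  shows "shc A X n x = shc A X n y \<longleftrightarrow> shrel A X n x y"
proof
  assume e: "shc A X n x = shc A X n y"
  have "shrel A X n x x" using x by (rule shrel.sh_refl)
  then have "x \<in> shc A X n x" by simp
  then have "x \<in> shc A X n y" by (simp only: e)
  then have "shrel A X n y x" by simp
  then show "shrel A X n x y" by (rule shrel.sh_sym)
next
  assume h: "shrel A X n x y"
  have hy: "shrel A X n y x" using h by (rule shrel.sh_sym)
  show "shc A X n x = shc A X n y"
  proof (rule set_eqI)
    fix z
    show "z \<in> shc A X n x \<longleftrightarrow> z \<in> shc A X n y"
      using shrel.sh_trans[OF h, of z] shrel.sh_trans[OF hy, of z] by auto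
  qed
qed

lemma cells_sh: "cells (sh A X) n = shc A X n ` cells X n" by (simp add: sh_def)

lemma act_shc: "closed A X \<Longrightarrow> f \<in> A \<Longrightarrow> x \<in> cells X (cod_c f) \<Longrightarrow>
  act (sh A X) f (shc A X (cod_c f) x) = shc A X (dom_c f) (act X f x)"
proof (rule set_eqI)
  assume cl: "closed A X" and f: "f \<in> A" and x: "x \<in> cells X (cod_c f)"
  fix z
  have "act (sh A X) f (shc A X (cod_c f) x) = {z. \<exists>y \<in> shc A X (cod_c f) x. shrel A X (dom_c f) (act X f y) z}"
    by (simp add: sh_def)
  moreover have "(\<exists>y \<in> shc A X (cod_c f) x. shrel A X (dom_c f) (act X f y) z) \<longleftrightarrow> shrel A X (dom_c f) (act X f x) z"
  proof
    assume "\<exists>y \<in> shc A X (cod_c f) x. shrel A X (dom_c f) (act X f y) z"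
    then obtain y where y: "shrel A X (cod_c f) x y" "shrel A X (dom_c f) (act X f y) z" by blast
    have "shrel A X (dom_c f) (act X f x) (act X f y)" using shrel.sh_act[OF y(1) f] by simp
    then show "shrel A X (dom_c f) (act X f x) z" using y(2) by (rule shrel.sh_trans)
  next
    assume "shrel A X (dom_c f) (act X f x) z"
    moreover have "shrel A X (cod_c f) x x" using x by (rule shrel.sh_refl)
    then have "x \<in> shc A X (cod_c f) x" by simp
    ultimately show "\<exists>y \<in> shc A X (cod_c f) x. shrel A X (dom_c f) (act X f y) z" by blast
  qed
  ultimately show "z \<in> act (sh A X) f (shc A X (cod_c f) x) \<longleftrightarrow> z \<in> shc A X (dom_c f) (act X f x)" by simp
qed

lemma sh_unique_rel:
  assumes cl: "closed A X"
    and fn: "\<And>f g x. f \<in> A \<Longrightarrow> g \<in> A \<Longrightarrow> dom_c f = cod_c g \<Longrightarrow> x \<in> cells X (cod_c f)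
               \<Longrightarrow> act X g (act X f x) = act X (comp_c f g) x"
    and idl: "\<And>x n. x \<in> cells X n \<Longrightarrow> act X (idc n) x = x"
    and A: "cat_of_cubes A"
  shows "x \<in> cells X k \<Longrightarrow> x' \<in> cells X k \<Longrightarrow>
     (\<forall>\<phi>\<in>A. cod_c \<phi> = k \<longrightarrow> dom_c \<phi> \<le> 1 \<longrightarrow> shrel A X (dom_c \<phi>) (act X \<phi> x) (act X \<phi> x'))
     \<Longrightarrow> shrel A X k x x'"
proof (induction k arbitrary: x x' rule: less_induct)
  case (less k)
  show ?case
  proof (cases "k \<le> 1")
    case True
    have "shrel A X (dom_c (idc k)) (act X (idc k) x) (act X (idc k) x')"
      using bspec[OF less.prems(3) cat_idc[OF A, of k]] True by simp
    then show ?thesis using idl[OF less.prems(1)] idl[OF less.prems(2)] by simp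
  next
    case False
    show ?thesis
    proof (rule shrel.sh_bnd)
      show "2 \<le> k" using False by simp
      show "x \<in> cells X k" "x' \<in> cells X k" by fact+
      fix f assume f: "f \<in> A" "cod_c f = k" "dom_c f < k"
      show "shrel A X (dom_c f) (act X f x) (act X f x')"
      proof (rule less.IH[OF f(3)])
        show "act X f x \<in> cells X (dom_c f)" "act X f x' \<in> cells X (dom_c f)"
          using cl f less.prems unfolding closed_def by auto
        show "\<forall>\<phi>\<in>A. cod_c \<phi> = dom_c f \<longrightarrow> dom_c \<phi> \<le> 1 \<longrightarrow>
           shrel A X (dom_c \<phi>) (act X \<phi> (act X f x)) (act X \<phi> (act X f x'))"
        proof (intro ballI impI)
          fix \<phi> assume \<phi>: "\<phi> \<in> A" "cod_c \<phi> = dom_c f" "dom_c \<phi> \<le> 1"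
          have c: "comp_c f \<phi> \<in> A" using cat_comp[OF A \<phi>(1) f(1)] \<phi> by simp
          show "shrel A X (dom_c \<phi>) (act X \<phi> (act X f x)) (act X \<phi> (act X f x'))"
            using less.prems(3) c \<phi> f fn[of f \<phi>] less.prems(1,2) by auto
        qed
      qed
    qed
  qed
qed


definition rem :: "nat \<Rightarrow> 'a list \<Rightarrow> 'a list" where
  "rem k w = take k w @ drop (Suc k) w"

lemma len_rem: "k < length w \<Longrightarrow> length (rem k w) = length w - 1"
  by (simp add: rem_def)

lemma nth_rem: "k < length w \<Longrightarrow> j < length w - 1 \<Longrightarrow>
   rem k w ! j = w ! (if j < k then j else Suc j)"
  by (auto simp: rem_def nth_append min_def)

lemma upt_split3: "k < n \<Longrightarrow> [0..<n] = [0..<k] @ k # [Suc k..<n]"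
proof -
  assume "k < n"
  then have "[0..<n] = [0..<k] @ [k..<n]" using upt_add_eq_append[of 0 k "n - k"] by simp
  moreover have "[k..<n] = k # [Suc k..<n]" using \<open>k < n\<close> upt_conv_Cons by blast
  ultimately show ?thesis by simp
qed

lemma filter_skip:
  assumes "k < n" "\<not> P k"
  shows "filter P [0..<n] = map (\<lambda>j. if j < k then j else Suc j) (filter (\<lambda>j. P (if j < k then j else Suc j)) [0..<n - 1])"
proof -
  let ?s = "\<lambda>j. if j < k then j else Suc j"
  have e1: "filter P [0..<n] = filter P [0..<k] @ filter P [Suc k..<n]"
    using upt_split3[OF assms(1)] assms(2) by simp
  have e2: "[0..<n-1] = [0..<k] @ [k..<n-1]"
    using upt_add_eq_append[of 0 k "n - 1 - k"] assms by simp
  have e3: "map ?s [0..<k] = [0..<k]" by (rule map_idI) simp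
  have e4: "map ?s [k..<n-1] = [Suc k..<n]"
  proof -
    have "map ?s [k..<n-1] = map Suc [k..<n-1]" by (rule map_cong) auto
    also have "\<dots> = [Suc k..<Suc (n-1)]" by (simp add: map_Suc_upt)
    finally show ?thesis using assms by simp
  qed
  have "map ?s (filter (\<lambda>j. P (?s j)) [0..<n - 1]) = filter P (map ?s [0..<n-1])"
    by (simp add: filter_map comp_def)
  also have "\<dots> = filter P (map ?s [0..<k] @ map ?s [k..<n-1])" using e2 by simp
  also have "\<dots> = filter P [0..<k] @ filter P [Suc k..<n]" using e3 e4 by simp
  finally show ?thesis using e1 by simp
qed

lemma lc_filter: "[f j. j \<leftarrow> xs, P j] = map f (filter P xs)"
  by (induction xs) auto

lemma bang_act_alt: "bang_act f w = map (\<lambda>j. w ! j) (filter (\<lambda>j. \<not> const_coord f j) [0..<cod_c f])"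
  unfolding bang_act_def by (rule lc_filter)

lemma const_idc: "j < n \<Longrightarrow> \<not> const_coord (idc n) j"
proof
  assume j: "j < n" and c: "const_coord (idc n) j"
  have "replicate n True \<in> cube (dom_c (idc n))" by simp
  then have "fun_c (idc n) (replicate n True) ! j = fun_c (idc n) (replicate (dom_c (idc n)) False) ! j"
    using c unfolding const_coord_def by blast
  moreover have "fun_c (idc n) (replicate n True) = replicate n True" by (simp add: idc_fun)
  moreover have "fun_c (idc n) (replicate n False) = replicate n False" by (simp add: idc_fun)
  ultimately show False using j by simp
qed

lemma bang_idc: "length w = n \<Longrightarrow> bang_act (idc n) w = w"
proof -
  assume l: "length w = n"
  have "filter (\<lambda>j. \<not> const_coord (idc n) j) [0..<n] = [0..<n]"
    using const_idc by (simp add: filter_id_conv)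
  then show ?thesis unfolding bang_act_alt using l map_nth[of w] by simp
qed

lemma nth_ins_s: "k \<le> length u \<Longrightarrow> j < length u \<Longrightarrow> ins k a u ! (if j < k then j else Suc j) = u ! j"
  by (auto simp: ins_def nth_append min_def)

lemma nth_ins_k: "k \<le> length u \<Longrightarrow> ins k a u ! k = a"
  by (auto simp: ins_def nth_append min_def)

lemma bang_face:
  assumes wf: "wf_map h" and ch: "cod_c h = n - 1" and i: "1 \<le> i" "i \<le> n" and lw: "length w = n"
  shows "bang_act (comp_c (face n i a) h) w = bang_act h (rem (i - 1) w)"
proof -
  define k where "k = i - 1"
  define F where "F = comp_c (face n i a) h"
  define s where "s = (\<lambda>j. if j < k then j else Suc j)"
  have kn: "k < n" using i k_def by simp
  have FF: "fun_c F v = ins k a (fun_c h v)" if "length v = dom_c h" for v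
    using that wf ch unfolding F_def k_def by (simp add: comp_fun face_fun wf_len)
  have lh: "length (fun_c h v) = n - 1" if "length v = dom_c h" for v
    using that wf ch by (simp add: wf_len)
  have cF: "const_coord F (s j) \<longleftrightarrow> const_coord h j" if j: "j < n - 1" for j
  proof -
    have "fun_c F v ! s j = fun_c h v ! j" if "length v = dom_c h" for v
      using FF[OF that] lh[OF that] kn j nth_ins_s[of k "fun_c h v" j a] unfolding s_def by simp
    then show ?thesis unfolding const_coord_def F_def by simp
  qed
  have ck: "const_coord F k"
  proof -
    have "fun_c F v ! k = a" if "length v = dom_c h" for v
      using FF[OF that] lh[OF that] kn nth_ins_k[of k "fun_c h v" a] by simp
    then show ?thesis unfolding const_coord_def F_def by simp
  qed
  have "bang_act F w = map (\<lambda>j. w ! j) (filter (\<lambda>j. \<not> const_coord F j) [0..<n])"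
    unfolding bang_act_alt F_def by simp
  also have "filter (\<lambda>j. \<not> const_coord F j) [0..<n] = map s (filter (\<lambda>j. \<not> const_coord F (s j)) [0..<n - 1])"
    unfolding s_def by (rule filter_skip[OF kn]) (use ck in simp)
  also have "filter (\<lambda>j. \<not> const_coord F (s j)) [0..<n - 1] = filter (\<lambda>j. \<not> const_coord h j) [0..<n - 1]"
    by (rule filter_cong) (auto simp: cF)
  finally have "bang_act F w = map (\<lambda>j. w ! s j) (filter (\<lambda>j. \<not> const_coord h j) [0..<n - 1])" by simp
  also have "\<dots> = map (\<lambda>j. rem k w ! j) (filter (\<lambda>j. \<not> const_coord h j) [0..<n - 1])"
    by (rule map_cong) (auto simp: nth_rem lw kn s_def)
  finally show ?thesis unfolding bang_act_alt F_def k_def using ch by simp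
qed

lemma bang_comp: "g \<in> box \<Longrightarrow> wf_map f \<Longrightarrow> dom_c g = cod_c f \<Longrightarrow> length w = cod_c g \<Longrightarrow>
   bang_act (comp_c g f) w = bang_act f (bang_act g w)"
proof (induction arbitrary: f w rule: box.induct)
  case (box_id n) then show ?case by (simp add: comp_idc_l bang_idc)
next
  case (box_face g i n a)
  have wg: "wf_map g" using box_face box_wf by blast
  have e: "comp_c (comp_c (face n i a) g) f = comp_c (face n i a) (comp_c g f)"
    using box_face by (simp add: comp_assoc)
  have lr: "length (rem (i - 1) w) = cod_c g" using box_face by (simp add: len_rem)
  have "bang_act (comp_c (face n i a) (comp_c g f)) w = bang_act (comp_c g f) (rem (i - 1) w)"
    using box_face wg by (intro bang_face) (auto simp: wf_comp)
  also have "\<dots> = bang_act f (bang_act g (rem (i - 1) w))" using box_face.IH[of f] box_face lr by simp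
  also have "bang_act g (rem (i - 1) w) = bang_act (comp_c (face n i a) g) w"
    using box_face wg by (intro bang_face[symmetric]) auto
  finally show ?case using e by simp
qed

lemma bang_len: "g \<in> box \<Longrightarrow> length w = cod_c g \<Longrightarrow> length (bang_act g w) = dom_c g"
proof (induction arbitrary: w rule: box.induct)
  case (box_id n)
  then show ?case by (simp add: bang_idc)
next
  case (box_face g i n a)
  have wg: "wf_map g" using box_face box_wf by blast
  have lr: "length (rem (i - 1) w) = cod_c g" using box_face by (simp add: len_rem)
  have "bang_act (comp_c (face n i a) g) w = bang_act g (rem (i - 1) w)"
    using box_face wg by (intro bang_face) auto
  then show ?case using box_face.IH lr by simp
qed

lemma bang_set: "length w = cod_c f \<Longrightarrow> set (bang_act f w) \<subseteq> set w"
  unfolding bang_act_alt by auto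

lemma bang_edge: "length w = length l + 1 + length r \<Longrightarrow> bang_act (edge l r) w = [w ! length l]"
proof -
  assume lw: "length w = length l + 1 + length r"
  have c: "const_coord (edge l r) j \<longleftrightarrow> j \<noteq> length l" if "j < length l + 1 + length r" for j
  proof -
    have "const_coord (edge l r) j \<longleftrightarrow> (\<forall>v::vert. length v = 1 \<longrightarrow> (l @ hd v # r) ! j = (l @ False # r) ! j)"
      unfolding const_coord_def by (auto simp: edge_fun)
    also have "\<dots> \<longleftrightarrow> (l @ True # r) ! j = (l @ False # r) ! j"
    proof
      assume "\<forall>v::vert. length v = 1 \<longrightarrow> (l @ hd v # r) ! j = (l @ False # r) ! j"
      then show "(l @ True # r) ! j = (l @ False # r) ! j" by (drule_tac x="[True]" in spec) simp
    next
      assume h: "(l @ True # r) ! j = (l @ False # r) ! j"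
      show "\<forall>v::vert. length v = 1 \<longrightarrow> (l @ hd v # r) ! j = (l @ False # r) ! j"
      proof (intro allI impI)
        fix v :: vert assume "length v = 1"
        then have "v = [False] \<or> v = [True]" using cube1 by blast
        then show "(l @ hd v # r) ! j = (l @ False # r) ! j" using h by auto
      qed
    qed
    also have "\<dots> \<longleftrightarrow> j \<noteq> length l" using that by (auto simp: nth_append nth_Cons split: nat.split)
    finally show ?thesis .
  qed
  have "filter (\<lambda>j. \<not> const_coord (edge l r) j) [0..<length l + 1 + length r] =
        filter (\<lambda>j. j = length l) [0..<length l + 1 + length r]"
  proof (rule filter_cong)
    fix j assume "j \<in> set [0..<length l + 1 + length r]"
    then have "j < length l + 1 + length r" by auto
    then show "(\<not> const_coord (edge l r) j) = (j = length l)" using c[of j] by blast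
  qed simp
  also have "\<dots> = [length l]"
  proof -
    have e: "[0..<length l + 1 + length r] = [0..<length l] @ length l # [Suc (length l)..<length l + 1 + length r]"
      by (rule upt_split3) simp
    have f1: "filter (\<lambda>j. j = length l) [0..<length l] = []" by (auto simp: filter_empty_conv)
    have f2: "filter (\<lambda>j. j = length l) [Suc (length l)..<length l + 1 + length r] = []"
      by (auto simp: filter_empty_conv)
    show ?thesis unfolding e by (simp only: filter_append f1 f2 filter.simps if_True append_Nil) simp
  qed
  finally show ?thesis unfolding bang_act_alt by simp
qed


lemma dist_self[simp]: "dist_v z z = 0" by (induction z) auto

lemma leq_CN[simp]: "leq_v (a # x) [] = False" "leq_v [] (a # x) = False" by (auto simp: leq_v_def)

lemma leq_antisym: "leq_v x y \<Longrightarrow> leq_v y x \<Longrightarrow> x = y"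
proof (induction x arbitrary: y)
  case Nil then show ?case by (simp add: leq_v_def)
next
  case (Cons a x) then show ?case by (cases y) auto
qed

lemma less_trans_v: "less_v x z \<Longrightarrow> less_v z y \<Longrightarrow> less_v x y"
  unfolding less_v_def using leq_trans leq_antisym by blast

lemma step_up: "less_v x y \<Longrightarrow> \<exists>l r l' r'. x = l @ False # r \<and> y = l' @ True # r' \<and> length l = length l'"
proof -
  assume h: "less_v x y"
  have "length x = length y" using h leq_len less_v_def by blast
  then show ?thesis using h
  proof (induction x y rule: list_induct2)
    case Nil then show ?case by (simp add: less_v_def)
  next
    case (Cons a x b y)
    show ?case
    proof (cases "a = b")
      case True
      then have "less_v x y" using Cons.prems by (auto simp: less_v_def)
      then obtain l r l' r' where "x = l @ False # r" "y = l' @ True # r'" "length l = length l'"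
        using Cons.IH by blast
      then have "a # x = (a # l) @ False # r \<and> b # y = (a # l') @ True # r' \<and> length (a # l) = length (a # l')"
        using True by simp
      then show ?thesis by blast
    next
      case False
      then have "a = False" "b = True" using Cons.prems by (auto simp: less_v_def)
      then have "a # x = [] @ False # x \<and> b # y = [] @ True # y \<and> length ([]::vert) = length ([]::vert)" by simp
      then show ?thesis by blast
    qed
  qed
qed

lemma mono_from_edges:
  assumes E: "\<And>x y. length x = n \<Longrightarrow> length y = n \<Longrightarrow> dist_v x y = 1 \<Longrightarrow> less_v x y \<Longrightarrow> less_v (g x) (g y)"
  shows "length x = n \<Longrightarrow> length y = n \<Longrightarrow> less_v x y \<Longrightarrow> less_v (g x) (g y)"
proof (induction "dist_v x y" arbitrary: x y rule: less_induct)
  case less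
  obtain l r l' r' where lr: "x = l @ False # r" "y = l' @ True # r'" "length l = length l'"
    using step_up[OF less.prems(3)] by blast
  have lr2: "length r = length r'" using lr less.prems by simp
  define z where "z = l @ True # r"
  have lz: "length z = n" using z_def lr less.prems by simp
  have lxy: "leq_v l l'" "leq_v r r'" using less.prems(3) lr lr2 by (auto simp: less_v_def leq_append)
  have xz: "less_v x z" using lr z_def by (auto simp: less_v_def leq_append leq_refl)
  have dxz: "dist_v x z = 1" using lr z_def by (simp add: dist_append)
  have gxz: "less_v (g x) (g z)" using E[OF less.prems(1) lz dxz xz] .
  show ?case
  proof (cases "z = y")
    case True then show ?thesis using gxz by simp
  next
    case False
    have "leq_v z y" using lr z_def lxy by (simp add: leq_append)
    then have zy: "less_v z y" using False less_v_def by blast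
    have "dist_v z y < dist_v x y" using lr z_def lr2 by (simp add: dist_append)
    then have "less_v (g z) (g y)" using less.hyps less.prems lz zy by blast
    then show ?thesis using gxz less_trans_v by blast
  qed
qed

lemma trunc1_simps[simp]: "cells (trunc1 X) k = (if k \<le> 1 then cells X k else {})" "act (trunc1 X) = act X"
  by (auto simp: trunc1_def)

lemma hat_dom_le: "adj_pres f \<Longrightarrow> dom_c f \<le> cod_c f"
proof -
  assume a: "adj_pres f"
  have wf: "wf_map f" using a adj_pres_def by blast
  let ?n = "dom_c f"
  have "\<forall>k \<le> ?n. k \<le> count_list (fun_c f (replicate k True @ replicate (?n - k) False)) True"
  proof (intro allI impI)
    fix k show "k \<le> ?n \<Longrightarrow> k \<le> count_list (fun_c f (replicate k True @ replicate (?n - k) False)) True"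
    proof (induction k)
      case 0 then show ?case by simp
    next
      case (Suc k)
      let ?x = "replicate k True @ replicate (?n - k) False"
      let ?y = "replicate (Suc k) True @ replicate (?n - Suc k) False"
      have x: "?x = replicate k True @ False # replicate (?n - Suc k) False"
        using Suc.prems by (simp add: Suc_diff_Suc replicate_Suc[symmetric])
      have y: "?y = replicate k True @ True # replicate (?n - Suc k) False"
        by (simp add: replicate_append_same[symmetric])
      have "less_v ?x ?y" unfolding x y by (auto simp: less_v_def leq_append leq_refl)
      then have lt: "less_v (fun_c f ?x) (fun_c f ?y)" using a Suc.prems unfolding adj_pres_def by auto
      have cnt: "count_list u True < count_list v True" if uv: "less_v u v" for u v :: vert
      proof -
        obtain l r l' r' where "u = l @ False # r" "v = l' @ True # r'" "length l = length l'"
          using step_up[OF uv] by blast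
        moreover have "leq_v u v" using uv less_v_def by blast
        ultimately have "leq_v l l'" "leq_v r r'" by (auto simp: leq_append leq_len)
        have mono: "count_list s True \<le> count_list t True" if "leq_v s t" for s t :: vert
          using that
        proof (induction s arbitrary: t)
          case Nil then show ?case by simp
        next
          case (Cons c s) then show ?case by (cases t) (fastforce simp: leq_v_def)+
        qed
        show ?thesis using \<open>u = _\<close> \<open>v = _\<close> mono[OF \<open>leq_v l l'\<close>] mono[OF \<open>leq_v r r'\<close>] by simp
      qed
      show ?case using Suc cnt[OF lt] by simp
    qed
  qed
  then have "?n \<le> count_list (fun_c f (replicate ?n True)) True" by auto
  also have "\<dots> \<le> length (fun_c f (replicate ?n True))"
  proof -
    have "count_list xs True \<le> length xs" for xs :: vert by (induction xs) auto
    then show ?thesis by blast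
  qed
  also have "\<dots> = cod_c f" using wf by (simp add: wf_len)
  finally show ?thesis .
qed


lemma hat_low_box: "f \<in> hat_box \<Longrightarrow> dom_c f \<le> 1 \<Longrightarrow> f \<in> box"
  using adj_low_box hat_box_def by blast

lemma hat_comp: "adj_pres g \<Longrightarrow> adj_pres f \<Longrightarrow> dom_c g = cod_c f \<Longrightarrow> adj_pres (comp_c g f)"
  by (rule adj_comp)

lemma vtx_in_box: "length v = n \<Longrightarrow> vtx n v \<in> box" using vtx_box by blast

lemma comp_g_vtx: "wf_map g \<Longrightarrow> length v = dom_c g \<Longrightarrow> comp_c g (vtx (dom_c g) v) = vtx (cod_c g) (fun_c g v)"
  by (rule comp_vtx)

lemma vtx_S: "length w = p \<Longrightarrow> vtx p w \<in> {\<psi>\<in>box. dom_c \<psi> \<le> 1 \<and> cod_c \<psi> = p}"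
  by (simp add: vtx_in_box)

locale coskgen =
  fixes A :: "cmap set" and Y :: "('y, 'z) psh_scheme" and \<Psi> :: "cmap \<Rightarrow> 'y" and p :: nat
  assumes A: "cat_of_cubes A"
    and H1: "\<And>k. k \<le> 1 \<Longrightarrow> cells Y k = \<Psi> ` {\<psi>\<in>box. dom_c \<psi> = k \<and> cod_c \<psi> = p}"
    and H2: "inj_on \<Psi> {\<psi>\<in>box. dom_c \<psi> \<le> 1 \<and> cod_c \<psi> = p}"
    and H3: "\<And>\<delta> \<psi>. \<delta> \<in> A \<Longrightarrow> \<psi> \<in> box \<Longrightarrow> dom_c \<psi> \<le> 1 \<Longrightarrow> cod_c \<psi> = p \<Longrightarrow> cod_c \<delta> = dom_c \<psi>
              \<Longrightarrow> act Y \<delta> (\<Psi> \<psi>) = \<Psi> (comp_c \<psi> \<delta>)"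
begin

definition U1 :: "nat \<Rightarrow> (cmap \<Rightarrow> 'y) \<Rightarrow> bool" where
  "U1 n u \<longleftrightarrow> (\<forall>\<phi>\<in>A. cod_c \<phi> = n \<longrightarrow> dom_c \<phi> \<le> 1 \<longrightarrow> u \<phi> \<in> cells Y (dom_c \<phi>))"
definition U2 :: "nat \<Rightarrow> (cmap \<Rightarrow> 'y) \<Rightarrow> bool" where
  "U2 n u \<longleftrightarrow> (\<forall>\<delta>\<in>A. \<forall>\<phi>\<in>A. dom_c \<delta> \<le> 1 \<longrightarrow> cod_c \<delta> = dom_c \<phi> \<longrightarrow> dom_c \<phi> \<le> 1 \<longrightarrow> cod_c \<phi> = n \<longrightarrow>
           u (comp_c \<phi> \<delta>) = act Y \<delta> (u \<phi>))"

lemma vtx_A: "length v = n \<Longrightarrow> vtx n v \<in> A" using cat_box[OF A vtx_in_box] .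

lemma exists_g:
  assumes u1: "U1 n u" and u2: "U2 n u"
  shows "\<exists>g. adj_pres g \<and> dom_c g = n \<and> cod_c g = p \<and> (\<forall>\<phi>\<in>A. cod_c \<phi> = n \<longrightarrow> dom_c \<phi> \<le> 1 \<longrightarrow> u \<phi> = \<Psi> (comp_c g \<phi>))"
proof -
  let ?S = "{\<psi>\<in>box. dom_c \<psi> \<le> 1 \<and> cod_c \<psi> = p}"
  define gv where "gv v = fun_c (inv_into ?S \<Psi> (u (vtx n v))) []" for v
  have uv: "u (vtx n v) = \<Psi> (vtx p (gv v)) \<and> length (gv v) = p" if "length v = n" for v
  proof -
    have "u (vtx n v) \<in> cells Y 0" using u1 vtx_A[OF that] unfolding U1_def by auto
    then obtain \<psi> where \<psi>: "\<psi> \<in> box" "dom_c \<psi> = 0" "cod_c \<psi> = p" "u (vtx n v) = \<Psi> \<psi>"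
      using H1[of 0] by auto
    have "inv_into ?S \<Psi> (\<Psi> \<psi>) = \<psi>" using H2 \<psi> by (intro inv_into_f_f) auto
    then have "gv v = fun_c \<psi> []" using \<psi> gv_def by simp
    moreover have "\<psi> = vtx p (fun_c \<psi> [])" using dom0_vtx[OF box_wf[OF \<psi>(1)] \<psi>(2)] \<psi>(3) by simp
    moreover have "length (fun_c \<psi> []) = p" using wf_len[OF box_wf[OF \<psi>(1)], of "[]"] \<psi> by simp
    ultimately show ?thesis using \<psi>(4) by simp
  qed
  define g where "g = mk_map n p gv"
  have wfg: "wf_map g" unfolding g_def by (rule wf_mapI) (use uv in blast)
  have gvtx: "comp_c g (vtx n v) = vtx p (gv v)" if "length v = n" for v
    using comp_vtx[OF wfg, of v] that by (simp add: g_def)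
  have main: "u \<phi> = \<Psi> (comp_c g \<phi>) \<and> comp_c g \<phi> \<in> box" if \<phi>: "\<phi> \<in> A" "cod_c \<phi> = n" "dom_c \<phi> \<le> 1" for \<phi>
  proof (cases "dom_c \<phi> = 0")
    case True
    have wf\<phi>: "wf_map \<phi>" using cat_wf[OF A \<phi>(1)] .
    have e: "\<phi> = vtx n (fun_c \<phi> [])" using dom0_vtx[OF wf\<phi> True] \<phi> by simp
    have l: "length (fun_c \<phi> []) = n" using wf_len[OF wf\<phi>, of "[]"] True \<phi> by simp
    have "comp_c g \<phi> = vtx p (gv (fun_c \<phi> []))" using gvtx[OF l] e by metis
    then show ?thesis using uv[OF l] e vtx_in_box[of "gv (fun_c \<phi> [])" p] by metis
  next
    case False
    then have d1: "dom_c \<phi> = 1" using \<phi> by simp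
    have adj: "adj_pres \<phi>" using cat_adj[OF A \<phi>(1)] .
    have wf\<phi>: "wf_map \<phi>" using cat_wf[OF A \<phi>(1)] .
    have "u \<phi> \<in> cells Y 1" using u1 \<phi> d1 unfolding U1_def by auto
    then obtain e where e: "e \<in> box" "dom_c e = 1" "cod_c e = p" "u \<phi> = \<Psi> e" using H1[of 1] by auto
    have wfe: "wf_map e" using box_wf e by blast
    have ends: "fun_c e [b] = gv (fun_c \<phi> [b])" for b
    proof -
      have vb: "vtx 1 [b] \<in> A" using vtx_A[of "[b]" 1] by simp
      have lb: "length (fun_c \<phi> [b]) = n" using wf_len[OF wf\<phi>, of "[b]"] d1 \<phi> by simp
      have "u (comp_c \<phi> (vtx 1 [b])) = act Y (vtx 1 [b]) (u \<phi>)"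
        using u2 vb \<phi> d1 unfolding U2_def by auto
      also have "\<dots> = \<Psi> (comp_c e (vtx 1 [b]))" using H3[OF vb e(1)] e by simp
      also have "comp_c e (vtx 1 [b]) = vtx p (fun_c e [b])" using comp_vtx[OF wfe, of "[b]"] e by simp
      finally have 1: "u (comp_c \<phi> (vtx 1 [b])) = \<Psi> (vtx p (fun_c e [b]))" .
      have "comp_c \<phi> (vtx 1 [b]) = vtx n (fun_c \<phi> [b])" using comp_vtx[OF wf\<phi>, of "[b]"] d1 \<phi> by simp
      then have 2: "u (comp_c \<phi> (vtx 1 [b])) = \<Psi> (vtx p (gv (fun_c \<phi> [b])))" using uv[OF lb] by simp
      have le: "length (fun_c e [b]) = p" using wf_len[OF wfe, of "[b]"] e by simp
      have "vtx p (fun_c e [b]) = vtx p (gv (fun_c \<phi> [b]))"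
      proof (rule inj_onD[OF H2 _ vtx_S[OF le] vtx_S])
        show "\<Psi> (vtx p (fun_c e [b])) = \<Psi> (vtx p (gv (fun_c \<phi> [b])))" using 1 2 by metis
        show "length (gv (fun_c \<phi> [b])) = p" using uv[OF lb] by blast
      qed
      then show ?thesis by (metis vtx_fun)
    qed
    have "comp_c g \<phi> = e"
    proof (rule wf_eq)
      show "wf_map (comp_c g \<phi>)" using wfg wf\<phi> \<phi> by (simp add: wf_comp g_def)
      show "wf_map e" by fact
      show "dom_c (comp_c g \<phi>) = dom_c e" "cod_c (comp_c g \<phi>) = cod_c e" using e d1 by (auto simp: g_def)
      fix v :: vert assume "length v = dom_c (comp_c g \<phi>)"
      then have v: "v = [False] \<or> v = [True]" using d1 cube1 by simp
      have l: "length (fun_c \<phi> v) = n" using wf_len[OF wf\<phi>, of v] v d1 \<phi> by auto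
      have "fun_c (comp_c g \<phi>) v = gv (fun_c \<phi> v)" using v d1 l by (auto simp: comp_fun g_def)
      then show "fun_c (comp_c g \<phi>) v = fun_c e v" using v ends by auto
    qed
    then show ?thesis using e by simp
  qed
  have adjg: "adj_pres g"
  proof -
    have edge_step: "less_v (fun_c g x) (fun_c g y) \<and> dist_v (fun_c g x) (fun_c g y) = 1"
      if xy: "length x = n" "length y = n" "dist_v x y = 1" "less_v x y" for x y
    proof -
      obtain l r l' r' where lr: "x = l @ False # r" "y = l' @ True # r'" "length l = length l'"
        using step_up[OF xy(4)] by blast
      have "length r = length r'" using lr xy by simp
      then have "l = l' \<and> r = r'" using xy(3) lr dist0 by (auto simp: dist_append)
      then have lr': "y = l @ True # r" using lr by simp
      let ?E = "edge l r"
      have EA: "?E \<in> A" using cat_box[OF A edge_box] .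
      have cE: "cod_c ?E = n" using lr xy by simp
      have gE: "comp_c g ?E \<in> box" using main[OF EA cE] by simp
      have adjE: "adj_pres (comp_c g ?E)" using box_adj[OF gE] .
      have fx: "fun_c (comp_c g ?E) [False] = fun_c g x" using lr by (simp add: comp_fun edge_fun)
      have fy: "fun_c (comp_c g ?E) [True] = fun_c g y" using lr' by (simp add: comp_fun edge_fun)
      have l1: "less_v [False] [True]" "dist_v [False] [True] = 1" by (auto simp: less_v_def)
      have m: "[False] \<in> cube (dom_c (comp_c g ?E))" "[True] \<in> cube (dom_c (comp_c g ?E))" by auto
      have "less_v (fun_c (comp_c g ?E) [False]) (fun_c (comp_c g ?E) [True])"
        using adjE m l1 unfolding adj_pres_def by blast
      moreover have "dist_v (fun_c (comp_c g ?E) [False]) (fun_c (comp_c g ?E) [True]) = 1"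
        using adjE m l1 unfolding adj_pres_def by blast
      ultimately show ?thesis using fx fy by simp
    qed
    have "less_v (fun_c g x) (fun_c g y)" if "length x = n" "length y = n" "less_v x y" for x y
      by (rule mono_from_edges[of n "fun_c g"]) (use edge_step that in auto)
    moreover have "dist_v (fun_c g x) (fun_c g y) = 1" if xy: "length x = n" "length y = n" "dist_v x y = 1" for x y
    proof -
      have "length x = length y" using xy by simp
      then obtain l r c where lr: "x = l @ c # r" "y = l @ (\<not>c) # r" using dist1 xy(3) by blast
      show ?thesis
      proof (cases c)
        case False
        then have "less_v x y" using lr by (auto simp: less_v_def leq_append leq_refl)
        then show ?thesis using edge_step xy by blast
      next
        case True
        then have "less_v y x" using lr by (auto simp: less_v_def leq_append leq_refl)
        then show ?thesis using edge_step[of y x] xy dist_sym by metis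
      qed
    qed
    ultimately show ?thesis using wfg unfolding adj_pres_def by (simp add: g_def)
  qed
  show ?thesis using adjg main by (intro exI[of _ g]) (auto simp: g_def)
qed

lemma g_unique:
  assumes "adj_pres g" "adj_pres g'" "dom_c g = n" "dom_c g' = n" "cod_c g = p" "cod_c g' = p"
    and eq: "\<And>v. length v = n \<Longrightarrow> \<Psi> (comp_c g (vtx n v)) = \<Psi> (comp_c g' (vtx n v))"
  shows "g = g'"
proof (rule wf_eq)
  show wg: "wf_map g" "wf_map g'" using assms adj_pres_def by auto
  show "dom_c g = dom_c g'" "cod_c g = cod_c g'" using assms by auto
  fix v :: vert assume l: "length v = dom_c g"
  have l': "length v = dom_c g'" using l assms by simp
  have c1: "comp_c g (vtx n v) = vtx p (fun_c g v)" using comp_vtx[OF wg(1) l] assms by simp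
  have c2: "comp_c g' (vtx n v) = vtx p (fun_c g' v)" using comp_vtx[OF wg(2) l'] assms by simp
  have "vtx p (fun_c g v) = vtx p (fun_c g' v)"
  proof (rule inj_onD[OF H2 _ vtx_S vtx_S])
    show "\<Psi> (vtx p (fun_c g v)) = \<Psi> (vtx p (fun_c g' v))" using eq[of v] c1 c2 l assms by simp
    show "length (fun_c g v) = p" using wf_len[OF wg(1) l] assms by simp
    show "length (fun_c g' v) = p" using wf_len[OF wg(2) l'] assms by simp
  qed
  then show "fun_c g v = fun_c g' v" by (metis vtx_fun)
qed

lemma g_conv:
  assumes g: "adj_pres g" "dom_c g = n" "cod_c g = p"
  shows "U1 n (\<lambda>\<phi>. \<Psi> (comp_c g \<phi>))" "U2 n (\<lambda>\<phi>. \<Psi> (comp_c g \<phi>))"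
proof -
  have gb: "comp_c g \<phi> \<in> box" if "\<phi> \<in> A" "cod_c \<phi> = n" "dom_c \<phi> \<le> 1" for \<phi>
    using adj_low_box adj_comp[OF g(1) cat_adj[OF A that(1)]] that g by simp
  show "U1 n (\<lambda>\<phi>. \<Psi> (comp_c g \<phi>))" unfolding U1_def
  proof (intro ballI impI)
    fix \<phi> assume "\<phi> \<in> A" "cod_c \<phi> = n" "dom_c \<phi> \<le> 1"
    then show "\<Psi> (comp_c g \<phi>) \<in> cells Y (dom_c \<phi>)" using H1[of "dom_c \<phi>"] gb g by auto
  qed
  show "U2 n (\<lambda>\<phi>. \<Psi> (comp_c g \<phi>))" unfolding U2_def
  proof (intro ballI impI)
    fix \<delta> \<phi> assume h: "\<delta> \<in> A" "\<phi> \<in> A" "dom_c \<delta> \<le> 1" "cod_c \<delta> = dom_c \<phi>" "dom_c \<phi> \<le> 1" "cod_c \<phi> = n"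
    have "comp_c g (comp_c \<phi> \<delta>) = comp_c (comp_c g \<phi>) \<delta>"
      using comp_assoc[OF cat_wf[OF A h(1)]] h g by simp
    then show "\<Psi> (comp_c g (comp_c \<phi> \<delta>)) = act Y \<delta> (\<Psi> (comp_c g \<phi>))"
      using H3[OF h(1) gb[OF h(2) h(6) h(5)]] h g by simp
  qed
qed

end


lemma lps_iso_sym:
  assumes "lps_iso A X lX Y lY"
    and cl: "\<And>f x. f \<in> A \<Longrightarrow> x \<in> cells X (cod_c f) \<Longrightarrow> act X f x \<in> cells X (dom_c f)"
  shows "lps_iso A Y lY X lX"
proof -
  obtain h where h: "\<forall>n. bij_betw (h n) (cells X n) (cells Y n)"
    "\<forall>f \<in> A. \<forall>x \<in> cells X (cod_c f). h (dom_c f) (act X f x) = act Y f (h (cod_c f) x)"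
    "\<forall>n. \<forall>x \<in> cells X n. lY n (h n x) = lX n x"
    using assms unfolding lps_iso_def by blast
  define h' where "h' n = inv_into (cells X n) (h n)" for n
  have b: "bij_betw (h' n) (cells Y n) (cells X n)" for n using h(1) bij_betw_inv_into h'_def by metis
  have hh: "h n (h' n y) = y" if "y \<in> cells Y n" for n y
    using h(1) that unfolding h'_def by (meson bij_betw_inv_into_right)
  have hh': "h' n (h n x) = x" if "x \<in> cells X n" for n x
    using h(1) that unfolding h'_def by (meson bij_betw_inv_into_left)
  have nat: "h' (dom_c f) (act Y f y) = act X f (h' (cod_c f) y)" if f: "f \<in> A" "y \<in> cells Y (cod_c f)" for f y
  proof -
    have x: "h' (cod_c f) y \<in> cells X (cod_c f)" using b f bij_betwE by blast
    have "act Y f y = h (dom_c f) (act X f (h' (cod_c f) y))" using h(2) f x hh[OF f(2)] by metis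
    moreover have "act X f (h' (cod_c f) y) \<in> cells X (dom_c f)" using cl f(1) x by blast
    ultimately show ?thesis using hh' by metis
  qed
  have lab: "lX n (h' n y) = lY n y" if "y \<in> cells Y n" for n y
  proof -
    have "h' n y \<in> cells X n" using b that bij_betwE by blast
    then show ?thesis using h(3) hh[OF that] by metis
  qed
  show ?thesis unfolding lps_iso_def using b nat lab by blast
qed

lemma lps_iso_trans:
  assumes "lps_iso A X lX Y lY" "lps_iso A Y lY Z lZ"
  shows "lps_iso A X lX Z lZ"
proof -
  obtain h where h: "\<forall>n. bij_betw (h n) (cells X n) (cells Y n)"
    "\<forall>f \<in> A. \<forall>x \<in> cells X (cod_c f). h (dom_c f) (act X f x) = act Y f (h (cod_c f) x)"
    "\<forall>n. \<forall>x \<in> cells X n. lY n (h n x) = lX n x"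
    using assms(1) unfolding lps_iso_def by blast
  obtain k where k: "\<forall>n. bij_betw (k n) (cells Y n) (cells Z n)"
    "\<forall>f \<in> A. \<forall>x \<in> cells Y (cod_c f). k (dom_c f) (act Y f x) = act Z f (k (cod_c f) x)"
    "\<forall>n. \<forall>x \<in> cells Y n. lZ n (k n x) = lY n x"
    using assms(2) unfolding lps_iso_def by blast
  have "bij_betw (\<lambda>x. k n (h n x)) (cells X n) (cells Z n)" for n
    using bij_betw_trans[OF h(1)[rule_format, of n] k(1)[rule_format, of n]] by (simp add: comp_def)
  moreover have "k (dom_c f) (h (dom_c f) (act X f x)) = act Z f (k (cod_c f) (h (cod_c f) x))"
    if "f \<in> A" "x \<in> cells X (cod_c f)" for f x
  proof -
    have "h (cod_c f) x \<in> cells Y (cod_c f)" using h(1) that bij_betwE by blast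
    then show ?thesis using h(2) k(2) that by simp
  qed
  moreover have "lZ n (k n (h n x)) = lX n x" if "x \<in> cells X n" for n x
  proof -
    have "h n x \<in> cells Y n" using h(1) that bij_betwE by blast
    then show ?thesis using h(3) k(3) that by simp
  qed
  ultimately show ?thesis unfolding lps_iso_def by (intro exI[of _ "\<lambda>n x. k n (h n x)"]) blast
qed

definition Ylift :: "cmap set \<Rightarrow> nat \<Rightarrow> cmap \<Rightarrow> (nat \<times> cmap \<times> cmap) set" where
  "Ylift A p f = cls A (box_cube p) (p, idc p, f)"

lemma box_cube_simps[simp]: "cells (box_cube p) k = {\<phi> \<in> box. dom_c \<phi> = k \<and> cod_c \<phi> = p}"
  "act (box_cube p) f \<phi> = comp_c \<phi> f"
  by (auto simp: box_cube_def)

lemma idc_box: "idc n \<in> box" by (rule box.box_id)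

lemma Y1:
  assumes A: "cat_of_cubes A" and x: "x \<in> box" "dom_c x = m" "cod_c x = p" and \<phi>: "\<phi> \<in> A" "cod_c \<phi> = m"
  shows "cls A (box_cube p) (m, x, \<phi>) = Ylift A p (comp_c x \<phi>)"
proof -
  have "((m, act (box_cube p) x (idc p), \<phi>), (cod_c x, idc p, comp_c x \<phi>)) \<in> LA_gen A (box_cube p)"
    by (rule genI) (use x \<phi> idc_box in auto)
  moreover have "act (box_cube p) x (idc p) = x" using comp_idc_l[OF box_wf[OF x(1)] x(3)] by simp
  ultimately have "((m, x, \<phi>), (p, idc p, comp_c x \<phi>)) \<in> LA_rel A (box_cube p)" using gen_step x by simp
  then show ?thesis unfolding Ylift_def using cls_eq by blast
qed

definition yinv :: "nat \<times> cmap \<times> cmap \<Rightarrow> cmap" where "yinv t = (case t of (m, x, \<phi>) \<Rightarrow> comp_c x \<phi>)"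

lemma Y2:
  assumes A: "cat_of_cubes A" and ab: "(a, b) \<in> LA_rel A (box_cube p)"
  shows "yinv a = yinv b"
proof -
  have g: "yinv a' = yinv b'" if "(a', b') \<in> LA_gen A (box_cube p)" for a' b'
  proof -
    from genE[OF that] obtain m \<psi> x \<phi> where e: "a' = (m, act (box_cube p) \<psi> x, \<phi>)" "b' = (cod_c \<psi>, x, comp_c \<psi> \<phi>)"
      "\<psi> \<in> box" "dom_c \<psi> = m" "x \<in> cells (box_cube p) (cod_c \<psi>)" "\<phi> \<in> A" "cod_c \<phi> = m" by blast
    have "comp_c (comp_c x \<psi>) \<phi> = comp_c x (comp_c \<psi> \<phi>)"
      using comp_assoc[OF cat_wf[OF A e(6)], of \<psi> x] e by simp
    then show ?thesis using e by (simp add: yinv_def)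
  qed
  have "True \<and> (yinv a, yinv b) \<in> Id\<^sup>*"
    apply (rule rtrancl_map_inv[where P="\<lambda>_. True", OF ab[unfolded LA_rel_def]])
    using g by auto
  then show ?thesis by simp
qed

lemma Y3:
  assumes A: "cat_of_cubes A" and e: "Ylift A p f = Ylift A p f'"
    and f: "wf_map f" "cod_c f = p" and f': "wf_map f'" "cod_c f' = p"
  shows "f = f'"
proof -
  have "((p, idc p, f), (p, idc p, f')) \<in> LA_rel A (box_cube p)" using e cls_eq unfolding Ylift_def by blast
  then have "comp_c (idc p) f = comp_c (idc p) f'" using Y2[OF A] by (fastforce simp: yinv_def)
  then show ?thesis using comp_idc_l f f' by metis
qed

lemma Y4:
  assumes A: "cat_of_cubes A"
  shows "cells (LA A (box_cube p)) n = Ylift A p ` {f \<in> A. dom_c f = n \<and> cod_c f = p}"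
proof -
  have "cls A (box_cube p) t \<in> Ylift A p ` {f \<in> A. dom_c f = n \<and> cod_c f = p}"
    if t: "t \<in> LA_elems A (box_cube p) n" for t
  proof -
    obtain m x \<phi> where tt: "t = (m, x, \<phi>)" by (cases t)
    have h: "x \<in> box" "dom_c x = m" "cod_c x = p" "\<phi> \<in> A" "cod_c \<phi> = m" "dom_c \<phi> = n"
      using t tt by (auto simp: LA_elems_def)
    have "cls A (box_cube p) t = Ylift A p (comp_c x \<phi>)" using Y1[OF A h(1-5)] tt by simp
    moreover have "comp_c x \<phi> \<in> A" using cat_comp[OF A h(4) cat_box[OF A h(1)]] h by simp
    ultimately show ?thesis using h by auto
  qed
  moreover have "Ylift A p f \<in> cls A (box_cube p) ` LA_elems A (box_cube p) n"
    if "f \<in> A" "dom_c f = n" "cod_c f = p" for f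
    unfolding Ylift_def using that idc_box by (auto simp: LA_elems_def)
  ultimately show ?thesis unfolding cells_LA by blast
qed

lemma Y5:
  assumes A: "cat_of_cubes A" and \<delta>: "\<delta> \<in> A" and f: "f \<in> A" "dom_c f = cod_c \<delta>"
  shows "act (LA A (box_cube p)) \<delta> (Ylift A p f) = Ylift A p (comp_c f \<delta>)"
  unfolding Ylift_def using act_cls[OF A \<delta>, of "(p, idc p, f)"] f by (simp add: mapof_def)

lemma Y6:
  assumes a: "length a = p" "set a \<subseteq> \<Sigma>"
  shows "natural (box_cube p) (bang \<Sigma>) (box_lab a)"
  unfolding natural_def
proof (intro conjI allI ballI)
  fix n x assume "x \<in> cells (box_cube p) n"
  then have x: "x \<in> box" "dom_c x = n" "cod_c x = p" by auto
  show "box_lab a n x \<in> cells (bang \<Sigma>) n"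
    using bang_len[OF x(1)] bang_set[of a x] a x by (auto simp: box_lab_def bang_def)
next
  fix \<psi> x assume "\<psi> \<in> box" "x \<in> cells (box_cube p) (cod_c \<psi>)"
  then show "box_lab a (dom_c \<psi>) (act (box_cube p) \<psi> x) = act (bang \<Sigma>) \<psi> (box_lab a (cod_c \<psi>) x)"
    using bang_comp[of x \<psi> a] a box_wf by (simp add: box_lab_def bang_def)
qed

lemma Y7:
  assumes A: "cat_of_cubes A" and a: "length a = p" "set a \<subseteq> \<Sigma>"
  shows "LA_lab A \<Sigma> (box_lab a) n (Ylift A p f) = shc A (LA A (bang \<Sigma>)) n (cls A (bang \<Sigma>) (p, a, f))"
  unfolding LA_lab_LAmap Ylift_def LAmap_cls[OF Y6[OF a]]
  using bang_idc[OF a(1)] by (simp add: box_lab_def)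


lemma distinct_count: "(\<And>i. count_list xs i \<le> 1) \<Longrightarrow> distinct xs"
proof (induction xs)
  case Nil then show ?case by simp
next
  case (Cons x xs)
  have "count_list (x # xs) x \<le> 1" using Cons.prems by blast
  then have "count_list xs x = 0" by simp
  then have "x \<notin> set xs" using count_list_0_iff by metis
  moreover have "count_list xs i \<le> 1" for i using Cons.prems[of i] by (simp split: if_splits)
  ultimately show ?case using Cons.IH by simp
qed

lemma dist_map: "dist_v (map f xs) (map f' xs) = length (filter (\<lambda>j. f j \<noteq> f' j) xs)"
  by (induction xs) auto

lemma count_filter: "length (filter (\<lambda>j. j = i) xs) = count_list xs i"
  by (induction xs) auto

lemma NT:
  assumes g: "adj_pres g" "dom_c g = n" "cod_c g = p"
    and nt: "non_twisted n p h" and hv: "\<And>v. length v = n \<Longrightarrow> h v = fun_c g v"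
  shows "g \<in> box"
proof -
  obtain \<psi> "is" where \<psi>: "\<psi> \<in> box" "dom_c \<psi> = length is" "cod_c \<psi> = p" "set is = {0..<n}"
    and ord: "\<forall>i. Suc i < n \<longrightarrow> first_occ is i < first_occ is (Suc i)"
    and eqn: "\<forall>v \<in> cube n. h v = fun_c \<psi> (map (\<lambda>i. v ! i) is)"
    using nt unfolding non_twisted_def by blast
  have good\<psi>: "good \<psi>" using box_good[OF \<psi>(1)] .
  have wfg: "wf_map g" using g adj_pres_def by blast
  have cnt: "count_list is i \<le> 1" for i
  proof (cases "i < n")
    case False
    then have "i \<notin> set is" using \<psi>(4) by simp
    then show ?thesis by simp
  next
    case True
    define v0 :: vert where "v0 = replicate i False @ False # replicate (n - 1 - i) False"
    define v1 :: vert where "v1 = replicate i False @ True # replicate (n - 1 - i) False"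
    have l: "length v0 = n" "length v1 = n" using True by (auto simp: v0_def v1_def)
    have d: "dist_v v0 v1 = 1" by (simp add: v0_def v1_def dist_append)
    have "dist_v (fun_c g v0) (fun_c g v1) = 1" using g l d unfolding adj_pres_def by auto
    then have "dist_v (fun_c \<psi> (map (\<lambda>i. v0 ! i) is)) (fun_c \<psi> (map (\<lambda>i. v1 ! i) is)) = 1"
      using eqn hv l by auto
    moreover have "dist_v (fun_c \<psi> (map (\<lambda>i. v0 ! i) is)) (fun_c \<psi> (map (\<lambda>i. v1 ! i) is))
       = dist_v (map (\<lambda>i. v0 ! i) is) (map (\<lambda>i. v1 ! i) is)"
      using good\<psi> \<psi>(2) unfolding good_def by simp
    moreover have "dist_v (map (\<lambda>i. v0 ! i) is) (map (\<lambda>i. v1 ! i) is) = count_list is i"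
    proof -
      have "filter (\<lambda>j. v0 ! j \<noteq> v1 ! j) is = filter (\<lambda>j. j = i) is"
      proof (rule filter_cong)
        fix j assume "j \<in> set is"
        then have "j < n" using \<psi>(4) by simp
        then show "(v0 ! j \<noteq> v1 ! j) = (j = i)" using True
          by (auto simp: v0_def v1_def nth_append nth_Cons split: nat.split)
      qed simp
      then show ?thesis using dist_map count_filter by metis
    qed
    ultimately show ?thesis by simp
  qed
  have dis: "distinct is" using distinct_count cnt by blast
  have len: "length is = n" using distinct_card[OF dis] \<psi>(4) by simp
  define pos where "pos i = first_occ is i" for i
  have posp: "pos i < n \<and> is ! pos i = i" if "i < n" for i
  proof -
    have "\<exists>j. j < length is \<and> is ! j = i" using that \<psi>(4) in_set_conv_nth[of i "is"] by auto
    then have "pos i < length is \<and> is ! pos i = i"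
      unfolding pos_def first_occ_def by (rule LeastI_ex)
    then show ?thesis using len by simp
  qed
  have ge: "i < n \<longrightarrow> i \<le> pos i" for i
  proof (induction i)
    case 0 then show ?case by simp
  next
    case (Suc i)
    then show ?case using ord pos_def by fastforce
  qed
  have le: "k < n \<longrightarrow> pos (n - 1 - k) \<le> n - 1 - k" for k
  proof (induction k)
    case 0 then show ?case using posp[of "n - 1"] by auto
  next
    case (Suc k)
    show ?case
    proof
      assume k: "Suc k < n"
      have e: "Suc (n - 1 - Suc k) = n - 1 - k" using k by simp
      have "Suc (n - 1 - Suc k) < n" using k by simp
      then have "pos (n - 1 - Suc k) < pos (Suc (n - 1 - Suc k))" using ord unfolding pos_def by blast
      then have "pos (n - 1 - Suc k) < pos (n - 1 - k)" using e by simp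
      moreover have "pos (n - 1 - k) \<le> n - 1 - k" using Suc.IH k by simp
      ultimately show "pos (n - 1 - Suc k) \<le> n - 1 - Suc k" using k by linarith
    qed
  qed
  have posid: "pos i = i" if "i < n" for i
  proof -
    have "pos (n - 1 - (n - 1 - i)) \<le> n - 1 - (n - 1 - i)" using le[of "n - 1 - i"] that by simp
    then have "pos i \<le> i" using that by simp
    then show ?thesis using ge[of i] that by simp
  qed
  have isid: "is = [0..<n]"
    by (rule nth_equalityI) (use len posp posid in auto)
  have "g = \<psi>"
  proof (rule wf_eq)
    show "wf_map g" by fact
    show "wf_map \<psi>" using box_wf \<psi>(1) by blast
    show "dom_c g = dom_c \<psi>" "cod_c g = cod_c \<psi>" using g \<psi> len by auto
    fix v :: vert assume "length v = dom_c g"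
    then have lv: "length v = n" using g by simp
    have "map (\<lambda>i. v ! i) is = v" using isid lv map_nth[of v] by simp
    then show "fun_c g v = fun_c \<psi> v" using hv[OF lv] eqn lv by auto
  qed
  then show ?thesis using \<psi> by simp
qed


lemma rmap_ract: "rmap G (ract f t) = ract f (rmap G t)"
  by (cases t) simp

lemma rmap_rmap: "rmap G' (rmap G t) = rmap (\<lambda>m x. G' m (G m x)) t"
  by (cases t) simp

lemma LA_iso:
  assumes A: "cat_of_cubes A" and N: "natural K K' G" and B: "\<And>n. bij_betw (G n) (cells K n) (cells K' n)"
    and CL: "\<And>\<psi> x. \<psi> \<in> box \<Longrightarrow> x \<in> cells K (cod_c \<psi>) \<Longrightarrow> act K \<psi> x \<in> cells K (dom_c \<psi>)"
    and L: "natural K (bang \<Sigma>) lab" and L': "natural K' (bang \<Sigma>) lab'"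
    and E: "\<And>n x. x \<in> cells K n \<Longrightarrow> lab' n (G n x) = lab n x"
  shows "lps_iso A (LA A K) (LA_lab A \<Sigma> lab) (LA A K') (LA_lab A \<Sigma> lab')"
proof -
  define G' where "G' n = inv_into (cells K n) (G n)" for n
  have GG': "G n (G' n y) = y" if "y \<in> cells K' n" for n y
    using B that unfolding G'_def by (meson bij_betw_inv_into_right)
  have G'G: "G' n (G n x) = x" if "x \<in> cells K n" for n x
    using B that unfolding G'_def by (meson bij_betw_inv_into_left)
  have G'c: "G' n y \<in> cells K n" if "y \<in> cells K' n" for n y
    using B that unfolding G'_def by (meson bij_betwE bij_betw_inv_into)
  have Gc: "G n x \<in> cells K' n" if "x \<in> cells K n" for n x using B that bij_betwE by blast
  have N': "natural K' K G'"
    unfolding natural_def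
  proof (intro conjI allI ballI)
    fix n y assume "y \<in> cells K' n" then show "G' n y \<in> cells K n" by (rule G'c)
  next
    fix \<psi> y assume \<psi>: "\<psi> \<in> box" "y \<in> cells K' (cod_c \<psi>)"
    define x where "x = G' (cod_c \<psi>) y"
    have x: "x \<in> cells K (cod_c \<psi>)" "G (cod_c \<psi>) x = y" using G'c GG' \<psi> x_def by auto
    have "act K' \<psi> y = G (dom_c \<psi>) (act K \<psi> x)" using N \<psi> x unfolding natural_def by auto
    then show "G' (dom_c \<psi>) (act K' \<psi> y) = act K \<psi> (G' (cod_c \<psi>) y)"
      using G'G CL[OF \<psi>(1) x(1)] x_def by simp
  qed
  define h where "h n C = LAmap A K' G C" for n :: nat and C
  define h' where "h' n C = LAmap A K G' C" for n :: nat and C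
  have elemsG: "rmap G t \<in> LA_elems A K' n" if "t \<in> LA_elems A K n" for t n
    using that Gc by (cases t) (auto simp: LA_elems_def)
  have elemsG': "rmap G' t \<in> LA_elems A K n" if "t \<in> LA_elems A K' n" for t n
    using that G'c by (cases t) (auto simp: LA_elems_def)
  have bij: "bij_betw (h n) (cells (LA A K) n) (cells (LA A K') n)" for n
  proof (rule bij_betw_byWitness[where f'="h' n"])
    show "\<forall>C\<in>cells (LA A K) n. h' n (h n C) = C"
    proof
      fix C assume "C \<in> cells (LA A K) n"
      then obtain t where t: "t \<in> LA_elems A K n" "C = cls A K t" using cells_LA by blast
      have "h' n (h n C) = cls A K (rmap G' (rmap G t))"
        unfolding h_def h'_def t(2) LAmap_cls[OF N] LAmap_cls[OF N'] ..
      moreover have "rmap G' (rmap G t) = t" using t(1) G'G by (cases t) (auto simp: LA_elems_def)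
      ultimately show "h' n (h n C) = C" using t by simp
    qed
    show "\<forall>C\<in>cells (LA A K') n. h n (h' n C) = C"
    proof
      fix C assume "C \<in> cells (LA A K') n"
      then obtain t where t: "t \<in> LA_elems A K' n" "C = cls A K' t" using cells_LA by blast
      have "h n (h' n C) = cls A K' (rmap G (rmap G' t))"
        unfolding h_def h'_def t(2) LAmap_cls[OF N] LAmap_cls[OF N'] ..
      moreover have "rmap G (rmap G' t) = t" using t(1) GG' by (cases t) (auto simp: LA_elems_def)
      ultimately show "h n (h' n C) = C" using t by simp
    qed
    show "h n ` cells (LA A K) n \<subseteq> cells (LA A K') n"
    proof
      fix D assume "D \<in> h n ` cells (LA A K) n"
      then obtain C where C: "C \<in> cells (LA A K) n" "D = h n C" by blast
      then obtain t where t: "t \<in> LA_elems A K n" "D = h n (cls A K t)" using cells_LA[of A K n] by auto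
      then have "D = cls A K' (rmap G t)" unfolding h_def LAmap_cls[OF N] by simp
      then show "D \<in> cells (LA A K') n" using elemsG[OF t(1)] cells_LA by blast
    qed
    show "h' n ` cells (LA A K') n \<subseteq> cells (LA A K) n"
    proof
      fix D assume "D \<in> h' n ` cells (LA A K') n"
      then obtain C where C: "C \<in> cells (LA A K') n" "D = h' n C" by blast
      then obtain t where t: "t \<in> LA_elems A K' n" "D = h' n (cls A K' t)" using cells_LA[of A K' n] by auto
      then have "D = cls A K (rmap G' t)" unfolding h'_def LAmap_cls[OF N'] by simp
      then show "D \<in> cells (LA A K) n" using elemsG'[OF t(1)] cells_LA by blast
    qed
  qed
  have nat: "h (dom_c f) (act (LA A K) f C) = act (LA A K') f (h (cod_c f) C)"
    if f: "f \<in> A" "C \<in> cells (LA A K) (cod_c f)" for f C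
  proof -
    obtain t where t: "t \<in> LA_elems A K (cod_c f)" "C = cls A K t" using f(2) cells_LA by blast
    have "act (LA A K) f C = cls A K (ract f t)" using act_cls_elems[OF A f(1) t(1)] t(2) by simp
    then have 1: "h (dom_c f) (act (LA A K) f C) = cls A K' (rmap G (ract f t))"
      unfolding h_def using LAmap_cls[OF N, of A "ract f t"] by simp
    have 2: "h (cod_c f) C = cls A K' (rmap G t)" unfolding h_def t(2) LAmap_cls[OF N] ..
    have "act (LA A K') f (cls A K' (rmap G t)) = cls A K' (ract f (rmap G t))"
      using act_cls_elems[OF A f(1) elemsG[OF t(1)]] by simp
    then show ?thesis using 1 2 rmap_ract by metis
  qed
  have lab: "LA_lab A \<Sigma> lab' n (h n C) = LA_lab A \<Sigma> lab n C" if C: "C \<in> cells (LA A K) n" for n C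
  proof -
    obtain t where t: "t \<in> LA_elems A K n" "C = cls A K t" using C cells_LA by blast
    have "h n C = cls A K' (rmap G t)" unfolding h_def t(2) LAmap_cls[OF N] ..
    then have 1: "LAmap A (bang \<Sigma>) lab' (h n C) = cls A (bang \<Sigma>) (rmap lab' (rmap G t))"
      using LAmap_cls[OF L'] by simp
    have 2: "LAmap A (bang \<Sigma>) lab C = cls A (bang \<Sigma>) (rmap lab t)" using LAmap_cls[OF L] t(2) by simp
    have "rmap lab' (rmap G t) = rmap lab t" using t(1) E by (cases t) (auto simp: LA_elems_def)
    then show ?thesis unfolding LA_lab_LAmap using 1 2 by simp
  qed
  show ?thesis unfolding lps_iso_def using bij nat lab by blast
qed


lemma bang_simps[simp]: "cells (bang \<Sigma>) n = {w. length w = n \<and> set w \<subseteq> \<Sigma>}" "act (bang \<Sigma>) = bang_act"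
  by (auto simp: bang_def)

lemma cat_box_box: "cat_of_cubes box"
  unfolding cat_of_cubes_def using box_adj box_comp by blast

context coskgen begin

definition Q :: "nat \<Rightarrow> (cmap \<Rightarrow> 'y) \<Rightarrow> cmap \<Rightarrow> bool" where
  "Q n u g \<longleftrightarrow> adj_pres g \<and> dom_c g = n \<and> cod_c g = p \<and> (\<forall>\<phi>\<in>A. cod_c \<phi> = n \<longrightarrow> dom_c \<phi> \<le> 1 \<longrightarrow> u \<phi> = \<Psi> (comp_c g \<phi>))"

definition gof :: "nat \<Rightarrow> (cmap \<Rightarrow> 'y) \<Rightarrow> cmap" where
  "gof n u = (THE g. Q n u g)"

lemma Q_uniq: "Q n u g \<Longrightarrow> Q n u g' \<Longrightarrow> g = g'"
proof -
  assume q: "Q n u g" "Q n u g'"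
  show ?thesis
  proof (rule g_unique[of g g' n])
    show "adj_pres g" "adj_pres g'" "dom_c g = n" "dom_c g' = n" "cod_c g = p" "cod_c g' = p"
      using q unfolding Q_def by auto
    fix v :: vert assume "length v = n"
    then have "vtx n v \<in> A" by (rule vtx_A)
    then show "\<Psi> (comp_c g (vtx n v)) = \<Psi> (comp_c g' (vtx n v))" using q unfolding Q_def by auto
  qed
qed

lemma gof_eq: "Q n u g \<Longrightarrow> gof n u = g"
  unfolding gof_def using Q_uniq by blast

lemma gof_Q: "U1 n u \<Longrightarrow> U2 n u \<Longrightarrow> Q n u (gof n u)"
  using exists_g[of n u] gof_eq unfolding Q_def by metis

end

locale cosks =
  fixes \<Sigma> :: "'s set" and a :: "'s list"
  assumes a: "set a \<subseteq> \<Sigma>"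
begin

abbreviation "p \<equiv> length a"
abbreviation "K1 \<equiv> trunc1 (box_cube (length a))"

sublocale C1: coskgen box K1 id p
proof
  show "cat_of_cubes box" by (rule cat_box_box)
  fix k :: nat assume "k \<le> 1"
  then show "cells K1 k = id ` {\<psi> \<in> box. dom_c \<psi> = k \<and> cod_c \<psi> = p}" by simp
next
  show "inj_on id {\<psi> \<in> box. dom_c \<psi> \<le> 1 \<and> cod_c \<psi> = p}" by simp
next
  fix \<delta> \<psi> assume "\<delta> \<in> box" "\<psi> \<in> box" "dom_c \<psi> \<le> 1" "cod_c \<psi> = p" "cod_c \<delta> = dom_c \<psi>"
  then show "act K1 \<delta> (id \<psi>) = id (comp_c \<psi> \<delta>)" by simp
qed

abbreviation "cc n \<equiv> cells (COSK_box \<Sigma> a) n"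

lemma cc_def: "x \<in> cc n \<longleftrightarrow> x \<in> cosk_cells box K1 (box_lab a) (bang \<Sigma>) n
    \<and> (n \<le> 1 \<or> non_twisted n p (x0 (\<lambda>\<phi>. fun_c \<phi> []) n x))"
  by (simp add: COSK_box_def COSK_def)

lemma act_cc: "act (COSK_box \<Sigma> a) = cosk_act box K1 (bang \<Sigma>)"
  by (simp add: COSK_box_def COSK_def)

lemma cosk_cellsD:
  assumes "x \<in> cosk_cells A Y ly S n"
  shows "snd x \<in> cells S n"
    "\<And>\<phi>. \<not> (\<phi> \<in> A \<and> cod_c \<phi> = n \<and> dom_c \<phi> \<le> 1) \<Longrightarrow> fst x \<phi> = undefined"
    "\<And>\<phi>. \<phi> \<in> A \<Longrightarrow> cod_c \<phi> = n \<Longrightarrow> dom_c \<phi> \<le> 1 \<Longrightarrow> fst x \<phi> \<in> cells Y (dom_c \<phi>) \<and> ly (dom_c \<phi>) (fst x \<phi>) = act S \<phi> (snd x)"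
    "\<And>\<delta> \<phi>. \<delta> \<in> A \<Longrightarrow> \<phi> \<in> A \<Longrightarrow> dom_c \<delta> \<le> 1 \<Longrightarrow> cod_c \<delta> = dom_c \<phi> \<Longrightarrow> dom_c \<phi> \<le> 1 \<Longrightarrow> cod_c \<phi> = n \<Longrightarrow>
           fst x (comp_c \<phi> \<delta>) = act Y \<delta> (fst x \<phi>)"
  using assms unfolding cosk_cells_def by auto

lemma cosk_U: "x \<in> cosk_cells box K1 ly S n \<Longrightarrow> C1.U1 n (fst x) \<and> C1.U2 n (fst x)"
  unfolding C1.U1_def C1.U2_def using cosk_cellsD[of x box K1 ly S n] by blast

definition G :: "nat \<Rightarrow> (cmap \<Rightarrow> cmap) \<times> 's list \<Rightarrow> cmap" where
  "G n x = C1.gof n (fst x)"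

lemma cc_G:
  assumes x: "x \<in> cc n"
  shows "G n x \<in> box" "C1.Q n (fst x) (G n x)"
proof -
  have xc: "x \<in> cosk_cells box K1 (box_lab a) (bang \<Sigma>) n" using x cc_def by blast
  have q: "C1.Q n (fst x) (G n x)" unfolding G_def using C1.gof_Q cosk_U[OF xc] by blast
  then show "C1.Q n (fst x) (G n x)" .
  have g: "adj_pres (G n x)" "dom_c (G n x) = n" "cod_c (G n x) = p" using q unfolding C1.Q_def by auto
  show "G n x \<in> box"
  proof (cases "n \<le> 1")
    case True then show ?thesis using adj_low_box g by simp
  next
    case False
    then have nt: "non_twisted n p (x0 (\<lambda>\<phi>. fun_c \<phi> []) n x)" using x cc_def by blast
    show ?thesis
    proof (rule NT[OF g nt])
      fix v :: vert assume v: "length v = n"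
      have wg: "wf_map (G n x)" using g adj_pres_def by blast
      have "fst x (vtx n v) = comp_c (G n x) (vtx n v)"
        using q vtx_in_box[OF v] unfolding C1.Q_def by simp
      also have "\<dots> = vtx p (fun_c (G n x) v)" using comp_vtx[OF wg, of v] g v by simp
      finally show "x0 (\<lambda>\<phi>. fun_c \<phi> []) n x v = fun_c (G n x) v"
        unfolding x0_def vtx_def[symmetric] by simp
    qed
  qed
qed

definition xc :: "nat \<Rightarrow> cmap \<Rightarrow> (cmap \<Rightarrow> cmap) \<times> 's list" where
  "xc n \<psi> = (\<lambda>\<phi>. if \<phi> \<in> box \<and> cod_c \<phi> = n \<and> dom_c \<phi> \<le> 1 then comp_c \<psi> \<phi> else undefined, bang_act \<psi> a)"

lemma xc_cc:
  assumes \<psi>: "\<psi> \<in> box" "dom_c \<psi> = n" "cod_c \<psi> = p"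
  shows "xc n \<psi> \<in> cc n" "G n (xc n \<psi>) = \<psi>"
proof -
  have w\<psi>: "wf_map \<psi>" using box_wf \<psi> by blast
  have s: "bang_act \<psi> a \<in> cells (bang \<Sigma>) n"
    using bang_len[OF \<psi>(1)] bang_set[of a \<psi>] a \<psi> by auto
  have "xc n \<psi> \<in> cosk_cells box K1 (box_lab a) (bang \<Sigma>) n"
    unfolding cosk_cells_def
  proof (simp only: mem_Collect_eq split_conv xc_def, intro conjI allI ballI impI)
    show "bang_act \<psi> a \<in> cells (bang \<Sigma>) n" by (rule s)
  next
    fix \<phi> assume "\<not> (\<phi> \<in> box \<and> cod_c \<phi> = n \<and> dom_c \<phi> \<le> 1)"
    then show "(if \<phi> \<in> box \<and> cod_c \<phi> = n \<and> dom_c \<phi> \<le> 1 then comp_c \<psi> \<phi> else undefined) = undefined" by (rule if_not_P)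
  next
    fix \<phi> assume h: "\<phi> \<in> box" "cod_c \<phi> = n" "dom_c \<phi> \<le> 1"
    show "(if \<phi> \<in> box \<and> cod_c \<phi> = n \<and> dom_c \<phi> \<le> 1 then comp_c \<psi> \<phi> else undefined) \<in> cells K1 (dom_c \<phi>)"
      using h box_comp[OF \<psi>(1) h(1)] \<psi> by simp
    show "box_lab a (dom_c \<phi>) (if \<phi> \<in> box \<and> cod_c \<phi> = n \<and> dom_c \<phi> \<le> 1 then comp_c \<psi> \<phi> else undefined) =
      act (bang \<Sigma>) \<phi> (bang_act \<psi> a)"
      using h bang_comp[OF \<psi>(1) box_wf[OF h(1)], of a] \<psi> by (simp add: box_lab_def)
  next
    fix \<delta> \<phi> assume h: "\<delta> \<in> box" "\<phi> \<in> box" "dom_c \<delta> \<le> 1" "cod_c \<delta> = dom_c \<phi>" "dom_c \<phi> \<le> 1" "cod_c \<phi> = n"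
    have "comp_c \<phi> \<delta> \<in> box" using box_comp[OF h(2) h(1)] h by simp
    moreover have "comp_c \<psi> (comp_c \<phi> \<delta>) = comp_c (comp_c \<psi> \<phi>) \<delta>"
      using comp_assoc[OF box_wf[OF h(1)]] h by simp
    ultimately show "(if comp_c \<phi> \<delta> \<in> box \<and> cod_c (comp_c \<phi> \<delta>) = n \<and> dom_c (comp_c \<phi> \<delta>) \<le> 1 then comp_c \<psi> (comp_c \<phi> \<delta>) else undefined) =
       act K1 \<delta> (if \<phi> \<in> box \<and> cod_c \<phi> = n \<and> dom_c \<phi> \<le> 1 then comp_c \<psi> \<phi> else undefined)"
      using h by simp
  qed
  moreover have "n \<le> 1 \<or> non_twisted n p (x0 (\<lambda>\<phi>. fun_c \<phi> []) n (xc n \<psi>))"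
  proof -
    have fo: "first_occ [0..<n] i = i" if "i < n" for i
      unfolding first_occ_def using that by (intro Least_equality) auto
    have "x0 (\<lambda>\<phi>. fun_c \<phi> []) n (xc n \<psi>) v = fun_c \<psi> (map (\<lambda>i. v ! i) [0..<n])" if "v \<in> cube n" for v
    proof -
      have "vtx n v \<in> box" by (rule vtx_in_box) (use that in simp)
      then have "fst (xc n \<psi>) (vtx n v) = vtx p (fun_c \<psi> v)"
        using comp_vtx[OF w\<psi>, of v] that \<psi> by (simp add: xc_def)
      moreover have "map (\<lambda>i. v ! i) [0..<n] = v" using that map_nth[of v] by simp
      ultimately show ?thesis unfolding x0_def vtx_def[symmetric] by simp
    qed
    then have "non_twisted n p (x0 (\<lambda>\<phi>. fun_c \<phi> []) n (xc n \<psi>))"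
      unfolding non_twisted_def using \<psi> fo by (intro exI[of _ \<psi>] exI[of _ "[0..<n]"]) auto
    then show ?thesis by blast
  qed
  ultimately show "xc n \<psi> \<in> cc n" using cc_def by blast
  have "C1.Q n (fst (xc n \<psi>)) \<psi>" unfolding C1.Q_def using box_adj[OF \<psi>(1)] \<psi> by (simp add: xc_def)
  then show "G n (xc n \<psi>) = \<psi>" unfolding G_def by (rule C1.gof_eq)
qed

end


context cosks begin

lemma cc_uniq:
  assumes x: "x \<in> cc n" and x': "x' \<in> cc n" and e: "G n x = G n x'"
  shows "x = x'"
proof -
  have xc: "x \<in> cosk_cells box K1 (box_lab a) (bang \<Sigma>) n" using x cc_def by blast
  have xc': "x' \<in> cosk_cells box K1 (box_lab a) (bang \<Sigma>) n" using x' cc_def by blast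
  have q: "C1.Q n (fst x) (G n x)" "C1.Q n (fst x') (G n x')" using cc_G x x' by auto
  have f: "fst x = fst x'"
  proof
    fix \<phi>
    show "fst x \<phi> = fst x' \<phi>"
    proof (cases "\<phi> \<in> box \<and> cod_c \<phi> = n \<and> dom_c \<phi> \<le> 1")
      case True then show ?thesis using q e unfolding C1.Q_def by simp
    next
      case False then show ?thesis using cosk_cellsD(2)[OF xc] cosk_cellsD(2)[OF xc'] by simp
    qed
  qed
  have s: "snd x \<in> cells (bang \<Sigma>) n" "snd x' \<in> cells (bang \<Sigma>) n"
    using cosk_cellsD(1)[OF xc] cosk_cellsD(1)[OF xc'] by auto
  have "snd x = snd x'"
  proof (rule nth_equalityI)
    show "length (snd x) = length (snd x')" using s by simp
    fix j assume j: "j < length (snd x)"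
    then have jn: "j < n" using s by simp
    define e where "e = edge (replicate j False) (replicate (n - 1 - j) False)"
    have eb: "e \<in> box" "cod_c e = n" "dom_c e = 1" using edge_box jn by (auto simp: e_def)
    have "box_lab a 1 (fst x e) = bang_act e (snd x)" using cosk_cellsD(3)[OF xc eb(1,2)] eb by simp
    moreover have "box_lab a 1 (fst x' e) = bang_act e (snd x')" using cosk_cellsD(3)[OF xc' eb(1,2)] eb by simp
    moreover have "bang_act e (snd x) = [snd x ! j]" "bang_act e (snd x') = [snd x' ! j]"
    proof -
      have "length (snd x) = length (replicate j False) + 1 + length (replicate (n - 1 - j) False)"
        "length (snd x') = length (replicate j False) + 1 + length (replicate (n - 1 - j) False)"
        using s jn by auto
      then show "bang_act e (snd x) = [snd x ! j]" "bang_act e (snd x') = [snd x' ! j]"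
        unfolding e_def using bang_edge by fastforce+
    qed
    ultimately show "snd x ! j = snd x' ! j" using f by simp
  qed
  then show ?thesis using f by (simp add: prod_eq_iff)
qed

lemma cc_xc: "x \<in> cc n \<Longrightarrow> x = xc n (G n x)"
proof -
  assume x: "x \<in> cc n"
  have q: "C1.Q n (fst x) (G n x)" "G n x \<in> box" using cc_G x by auto
  have g: "dom_c (G n x) = n" "cod_c (G n x) = p" using q unfolding C1.Q_def by auto
  show ?thesis using cc_uniq[OF x xc_cc(1)[OF q(2) g]] xc_cc(2)[OF q(2) g] by simp
qed

lemma cc_act:
  assumes \<psi>: "\<psi> \<in> box" and x: "x \<in> cc (cod_c \<psi>)"
  shows "act (COSK_box \<Sigma> a) \<psi> x = xc (dom_c \<psi>) (comp_c (G (cod_c \<psi>) x) \<psi>)"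
proof -
  let ?n = "cod_c \<psi>" and ?g = "G (cod_c \<psi>) x"
  have q: "C1.Q ?n (fst x) ?g" "?g \<in> box" using cc_G x by auto
  have g: "dom_c ?g = ?n" "cod_c ?g = p" using q unfolding C1.Q_def by auto
  have xx: "x = xc ?n ?g" using cc_xc x by blast
  have w\<psi>: "wf_map \<psi>" using box_wf \<psi> by blast
  have 1: "(if \<phi> \<in> box \<and> cod_c \<phi> = dom_c \<psi> \<and> dom_c \<phi> \<le> 1 then fst x (comp_c \<psi> \<phi>) else undefined)
     = (if \<phi> \<in> box \<and> cod_c \<phi> = dom_c \<psi> \<and> dom_c \<phi> \<le> 1 then comp_c (comp_c ?g \<psi>) \<phi> else undefined)" for \<phi>
  proof (cases "\<phi> \<in> box \<and> cod_c \<phi> = dom_c \<psi> \<and> dom_c \<phi> \<le> 1")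
    case True
    have "comp_c \<psi> \<phi> \<in> box" using box_comp[OF \<psi>] True by simp
    then have "fst x (comp_c \<psi> \<phi>) = comp_c ?g (comp_c \<psi> \<phi>)" using q(1) True unfolding C1.Q_def by simp
    also have "\<dots> = comp_c (comp_c ?g \<psi>) \<phi>" using comp_assoc[OF box_wf] True g by simp
    finally show ?thesis using True by simp
  next
    case False
    show ?thesis unfolding if_not_P[OF False] ..
  qed
  have 2: "bang_act \<psi> (snd x) = bang_act (comp_c ?g \<psi>) a"
  proof -
    have "snd x = snd (xc ?n ?g)" using xx by (rule arg_cong)
    then have "snd x = bang_act ?g a" by (simp add: xc_def)
    then show ?thesis using bang_comp[OF q(2) w\<psi>, of a] g by simp
  qed
  show ?thesis unfolding act_cc cosk_act_def xc_def using 1 2 by simp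
qed

lemma cc_closed: "\<psi> \<in> box \<Longrightarrow> x \<in> cc (cod_c \<psi>) \<Longrightarrow> act (COSK_box \<Sigma> a) \<psi> x \<in> cc (dom_c \<psi>)
   \<and> G (dom_c \<psi>) (act (COSK_box \<Sigma> a) \<psi> x) = comp_c (G (cod_c \<psi>) x) \<psi>"
proof -
  assume \<psi>: "\<psi> \<in> box" and x: "x \<in> cc (cod_c \<psi>)"
  have q: "C1.Q (cod_c \<psi>) (fst x) (G (cod_c \<psi>) x)" "G (cod_c \<psi>) x \<in> box" using cc_G x by auto
  have g: "dom_c (G (cod_c \<psi>) x) = cod_c \<psi>" "cod_c (G (cod_c \<psi>) x) = p" using q unfolding C1.Q_def by auto
  have b: "comp_c (G (cod_c \<psi>) x) \<psi> \<in> box" using box_comp[OF q(2) \<psi>] g by simp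
  show ?thesis using cc_act[OF \<psi> x] xc_cc[OF b] g by simp
qed

theorem Iso1:
  assumes A: "cat_of_cubes A"
  shows "lps_iso A (LA A (COSK_box \<Sigma> a)) (LA_lab A \<Sigma> cosk_lab) (LA A (box_cube p)) (LA_lab A \<Sigma> (box_lab a))"
proof (rule LA_iso[OF A])
  show N: "natural (COSK_box \<Sigma> a) (box_cube p) G"
    unfolding natural_def
  proof (intro conjI allI ballI)
    fix n x assume "x \<in> cc n"
    then show "G n x \<in> cells (box_cube p) n" using cc_G unfolding C1.Q_def by auto
  next
    fix \<psi> x assume "\<psi> \<in> box" "x \<in> cc (cod_c \<psi>)"
    then show "G (dom_c \<psi>) (act (COSK_box \<Sigma> a) \<psi> x) = act (box_cube p) \<psi> (G (cod_c \<psi>) x)"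
      using cc_closed by simp
  qed
  show "bij_betw (G n) (cc n) (cells (box_cube p) n)" for n
  proof (rule bij_betw_byWitness[where f'="xc n"])
    show "\<forall>x\<in>cc n. xc n (G n x) = x" using cc_xc by metis
    show "\<forall>\<psi>\<in>cells (box_cube p) n. G n (xc n \<psi>) = \<psi>" using xc_cc by auto
    show "G n ` cc n \<subseteq> cells (box_cube p) n" using N unfolding natural_def by blast
    show "xc n ` cells (box_cube p) n \<subseteq> cc n" using xc_cc by auto
  qed
  show "\<And>\<psi> x. \<psi> \<in> box \<Longrightarrow> x \<in> cc (cod_c \<psi>) \<Longrightarrow> act (COSK_box \<Sigma> a) \<psi> x \<in> cc (dom_c \<psi>)"
    using cc_closed by blast
  show "natural (COSK_box \<Sigma> a) (bang \<Sigma>) cosk_lab"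
    unfolding natural_def
  proof (intro conjI allI ballI)
    fix n x assume "x \<in> cc n"
    then have "x \<in> cosk_cells box K1 (box_lab a) (bang \<Sigma>) n" using cc_def by blast
    then have "snd x \<in> cells (bang \<Sigma>) n" by (rule cosk_cellsD(1))
    then show "cosk_lab n x \<in> cells (bang \<Sigma>) n" by (simp add: cosk_lab_def)
  next
    fix \<psi> x assume "\<psi> \<in> box" "x \<in> cc (cod_c \<psi>)"
    then show "cosk_lab (dom_c \<psi>) (act (COSK_box \<Sigma> a) \<psi> x) = act (bang \<Sigma>) \<psi> (cosk_lab (cod_c \<psi>) x)"
      by (simp add: act_cc cosk_act_def cosk_lab_def)
  qed
  show "natural (box_cube p) (bang \<Sigma>) (box_lab a)" using Y6 a by blast
  fix n x assume x: "x \<in> cc n"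
  have "x = xc n (G n x)" using cc_xc x by blast
  then have "snd x = snd (xc n (G n x))" by (rule arg_cong)
  then have "snd x = bang_act (G n x) a" by (simp add: xc_def)
  then show "box_lab a n (G n x) = cosk_lab n x" by (simp add: box_lab_def cosk_lab_def)
qed

end


lemma cosk_simps[simp]: "cells (cosk A Y ly S) n = cosk_cells A Y ly S n" "act (cosk A Y ly S) = cosk_act A Y S"
  by (auto simp: cosk_def)

lemma A_low: "cat_of_cubes A \<Longrightarrow> k \<le> 1 \<Longrightarrow> {f \<in> A. dom_c f = k \<and> cod_c f = p} = {\<psi> \<in> box. dom_c \<psi> = k \<and> cod_c \<psi> = p}"
  using adj_low_box cat_adj cat_box by fastforce

locale cosk2 = cosks \<Sigma> a for \<Sigma> :: "'s set" and a :: "'s list" +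
  fixes A :: "cmap set"
  assumes A: "cat_of_cubes A"
begin

abbreviation "Y2 \<equiv> trunc1 (LA A (box_cube p))"
abbreviation "X \<equiv> LA A (bang \<Sigma>)"
abbreviation "S \<equiv> ShL A \<Sigma>"
abbreviation "ly \<equiv> LA_lab A \<Sigma> (box_lab a)"
abbreviation "kc n \<equiv> cells (cosk A Y2 ly S) n"

sublocale C2: coskgen A Y2 "Ylift A p" p
proof
  show "cat_of_cubes A" by (rule A)
  fix k :: nat assume k: "k \<le> 1"
  show "cells Y2 k = Ylift A p ` {\<psi> \<in> box. dom_c \<psi> = k \<and> cod_c \<psi> = p}"
    using Y4[OF A] A_low[OF A k] k by simp
next
  show "inj_on (Ylift A p) {\<psi> \<in> box. dom_c \<psi> \<le> 1 \<and> cod_c \<psi> = p}"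
    by (rule inj_onI) (use Y3[OF A] box_wf in auto)
next
  fix \<delta> \<psi> assume "\<delta> \<in> A" "\<psi> \<in> box" "dom_c \<psi> \<le> 1" "cod_c \<psi> = p" "cod_c \<delta> = dom_c \<psi>"
  then show "act Y2 \<delta> (Ylift A p \<psi>) = Ylift A p (comp_c \<psi> \<delta>)"
    using Y5[OF A] cat_box[OF A] by simp
qed

lemma X_closed: "closed A X"
  unfolding closed_def using LA_closed[OF A] by blast

lemma S_unique:
  assumes s: "s \<in> cells S n" "s' \<in> cells S n"
    and e: "\<And>\<phi>. \<phi> \<in> A \<Longrightarrow> cod_c \<phi> = n \<Longrightarrow> dom_c \<phi> \<le> 1 \<Longrightarrow> act S \<phi> s = act S \<phi> s'"
  shows "s = s'"
proof -
  obtain x x' where x: "x \<in> cells X n" "s = shc A X n x" "x' \<in> cells X n" "s' = shc A X n x'"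
    using s unfolding ShL_def cells_sh by blast
  have "shrel A X n x x'"
  proof (rule sh_unique_rel[OF X_closed _ _ A x(1) x(3)])
    show "\<And>f g x. f \<in> A \<Longrightarrow> g \<in> A \<Longrightarrow> dom_c f = cod_c g \<Longrightarrow> x \<in> cells X (cod_c f)
               \<Longrightarrow> act X g (act X f x) = act X (comp_c f g) x" using LA_funct[OF A] by blast
    show "\<And>x n. x \<in> cells X n \<Longrightarrow> act X (idc n) x = x" using LA_idc[OF A] by blast
    show "\<forall>\<phi>\<in>A. cod_c \<phi> = n \<longrightarrow> dom_c \<phi> \<le> 1 \<longrightarrow> shrel A X (dom_c \<phi>) (act X \<phi> x) (act X \<phi> x')"
    proof (intro ballI impI)
      fix \<phi> assume \<phi>: "\<phi> \<in> A" "cod_c \<phi> = n" "dom_c \<phi> \<le> 1"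
      have "act S \<phi> s = shc A X (dom_c \<phi>) (act X \<phi> x)"
        unfolding ShL_def x(2) using act_shc[OF X_closed \<phi>(1)] x(1) \<phi>(2) by blast
      moreover have "act S \<phi> s' = shc A X (dom_c \<phi>) (act X \<phi> x')"
        unfolding ShL_def x(4) using act_shc[OF X_closed \<phi>(1)] x(3) \<phi>(2) by blast
      moreover have "act X \<phi> x \<in> cells X (dom_c \<phi>)" using LA_closed[OF A \<phi>(1)] x(1) \<phi>(2) by blast
      ultimately show "shrel A X (dom_c \<phi>) (act X \<phi> x) (act X \<phi> x')" using e[OF \<phi>] shc_eq by metis
    qed
  qed
  then show ?thesis using x shc_eq by metis
qed

definition lbl :: "cmap \<Rightarrow> (nat \<times> 's list \<times> cmap) set set" where
  "lbl g = shc A X (dom_c g) (cls A (bang \<Sigma>) (p, a, g))"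

lemma lbl_ly: "g \<in> A \<Longrightarrow> ly (dom_c g) (Ylift A p g) = lbl g"
  unfolding lbl_def using Y7[OF A refl a] by blast

lemma lbl_cell: "g \<in> A \<Longrightarrow> cod_c g = p \<Longrightarrow> lbl g \<in> cells S (dom_c g)"
proof -
  assume g: "g \<in> A" "cod_c g = p"
  have "(p, a, g) \<in> LA_elems A (bang \<Sigma>) (dom_c g)" using g a by (simp add: LA_elems_def)
  then have "cls A (bang \<Sigma>) (p, a, g) \<in> cells X (dom_c g)" using cells_LA by blast
  then show ?thesis unfolding lbl_def ShL_def cells_sh by blast
qed

lemma act_lbl: "g \<in> A \<Longrightarrow> cod_c g = p \<Longrightarrow> f \<in> A \<Longrightarrow> dom_c g = cod_c f \<Longrightarrow> act S f (lbl g) = lbl (comp_c g f)"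
proof -
  assume g: "g \<in> A" "cod_c g = p" and f: "f \<in> A" "dom_c g = cod_c f"
  have el: "(p, a, g) \<in> LA_elems A (bang \<Sigma>) (cod_c f)" using g a f by (simp add: LA_elems_def)
  then have c: "cls A (bang \<Sigma>) (p, a, g) \<in> cells X (cod_c f)" using cells_LA by blast
  have "act S f (lbl g) = shc A X (dom_c f) (act X f (cls A (bang \<Sigma>) (p, a, g)))"
    unfolding lbl_def ShL_def using act_shc[OF X_closed f(1) c] f(2) by simp
  also have "act X f (cls A (bang \<Sigma>) (p, a, g)) = cls A (bang \<Sigma>) (p, a, comp_c g f)"
    using conjunct1[OF act_cls_elems[OF A f(1) el]] by simp
  finally show ?thesis unfolding lbl_def by simp
qed

definition Phi :: "cmap \<Rightarrow> (cmap \<Rightarrow> (nat \<times> cmap \<times> cmap) set) \<times> (nat \<times> 's list \<times> cmap) set set" where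
  "Phi g = (\<lambda>\<phi>. if \<phi> \<in> A \<and> cod_c \<phi> = dom_c g \<and> dom_c \<phi> \<le> 1 then Ylift A p (comp_c g \<phi>) else undefined, lbl g)"

lemma uQ: "adj_pres g \<Longrightarrow> dom_c g = n \<Longrightarrow> cod_c g = p \<Longrightarrow>
   C2.Q n (\<lambda>\<phi>. if \<phi> \<in> A \<and> cod_c \<phi> = n \<and> dom_c \<phi> \<le> 1 then Ylift A p (comp_c g \<phi>) else undefined) g"
  unfolding C2.Q_def by simp

lemma u_in:
  assumes g: "adj_pres g" "dom_c g = n" "cod_c g = p"
  shows "(\<lambda>\<phi>. if \<phi> \<in> A \<and> cod_c \<phi> = n \<and> dom_c \<phi> \<le> 1 then Ylift A p (comp_c g \<phi>) else undefined)
     = (\<lambda>\<phi>. if \<phi> \<in> A \<and> cod_c \<phi> = n \<and> dom_c \<phi> \<le> 1 then Ylift A p (comp_c g \<phi>) else undefined)" ..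

lemma gcomp_A: "adj_pres g \<Longrightarrow> \<phi> \<in> A \<Longrightarrow> cod_c \<phi> = dom_c g \<Longrightarrow> dom_c \<phi> \<le> 1 \<Longrightarrow> comp_c g \<phi> \<in> A"
  using adj_low_box adj_comp cat_adj[OF A] cat_box[OF A] by simp

lemma cosk_cellsI:
  assumes g: "adj_pres g" "dom_c g = n" "cod_c g = p" and s: "s \<in> cells S n"
    and lab: "\<And>\<phi>. \<phi> \<in> A \<Longrightarrow> cod_c \<phi> = n \<Longrightarrow> dom_c \<phi> \<le> 1 \<Longrightarrow> lbl (comp_c g \<phi>) = act S \<phi> s"
  shows "((\<lambda>\<phi>. if \<phi> \<in> A \<and> cod_c \<phi> = n \<and> dom_c \<phi> \<le> 1 then Ylift A p (comp_c g \<phi>) else undefined), s) \<in> kc n"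
proof -
  have U: "C2.U1 n (\<lambda>\<phi>. Ylift A p (comp_c g \<phi>))" "C2.U2 n (\<lambda>\<phi>. Ylift A p (comp_c g \<phi>))"
    using C2.g_conv[OF g] by auto
  show ?thesis
    unfolding cosk_simps cosk_cells_def
  proof (simp only: mem_Collect_eq split_conv, intro conjI allI ballI impI)
    show "s \<in> cells S n" by (rule s)
  next
    fix \<phi> assume "\<not> (\<phi> \<in> A \<and> cod_c \<phi> = n \<and> dom_c \<phi> \<le> 1)"
    then show "(if \<phi> \<in> A \<and> cod_c \<phi> = n \<and> dom_c \<phi> \<le> 1 then Ylift A p (comp_c g \<phi>) else undefined) = undefined"
      by (rule if_not_P)
  next
    fix \<phi> assume h: "\<phi> \<in> A" "cod_c \<phi> = n" "dom_c \<phi> \<le> 1"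
    show "(if \<phi> \<in> A \<and> cod_c \<phi> = n \<and> dom_c \<phi> \<le> 1 then Ylift A p (comp_c g \<phi>) else undefined) \<in> cells Y2 (dom_c \<phi>)"
      using U(1) h unfolding C2.U1_def by simp
    have "ly (dom_c \<phi>) (Ylift A p (comp_c g \<phi>)) = lbl (comp_c g \<phi>)"
      using lbl_ly[OF gcomp_A[OF g(1) h(1)]] h g by simp
    then show "ly (dom_c \<phi>) (if \<phi> \<in> A \<and> cod_c \<phi> = n \<and> dom_c \<phi> \<le> 1 then Ylift A p (comp_c g \<phi>) else undefined) = act S \<phi> s"
      using lab[OF h] h by simp
  next
    fix \<delta> \<phi> assume h: "\<delta> \<in> A" "\<phi> \<in> A" "dom_c \<delta> \<le> 1" "cod_c \<delta> = dom_c \<phi>" "dom_c \<phi> \<le> 1" "cod_c \<phi> = n"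
    have "comp_c \<phi> \<delta> \<in> A" using cat_comp[OF A h(1) h(2)] h by simp
    then show "(if comp_c \<phi> \<delta> \<in> A \<and> cod_c (comp_c \<phi> \<delta>) = n \<and> dom_c (comp_c \<phi> \<delta>) \<le> 1 then Ylift A p (comp_c g (comp_c \<phi> \<delta>)) else undefined) =
       act Y2 \<delta> (if \<phi> \<in> A \<and> cod_c \<phi> = n \<and> dom_c \<phi> \<le> 1 then Ylift A p (comp_c g \<phi>) else undefined)"
      using U(2) h unfolding C2.U2_def by simp
  qed
qed

lemma Phi_cell: "g \<in> A \<Longrightarrow> adj_pres g \<Longrightarrow> dom_c g = n \<Longrightarrow> cod_c g = p \<Longrightarrow> Phi g \<in> kc n"
proof -
  assume g: "g \<in> A" "adj_pres g" "dom_c g = n" "cod_c g = p"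
  have "lbl (comp_c g \<phi>) = act S \<phi> (lbl g)" if "\<phi> \<in> A" "cod_c \<phi> = n" "dom_c \<phi> \<le> 1" for \<phi>
    using act_lbl[OF g(1) g(4) that(1)] that g by simp
  moreover have "lbl g \<in> cells S n" using lbl_cell[OF g(1) g(4)] g(3) by simp
  ultimately show ?thesis unfolding Phi_def using cosk_cellsI[OF g(2-4)] g(3) by simp
qed

lemma kc_D:
  assumes x: "x \<in> kc n"
  shows "C2.Q n (fst x) (C2.gof n (fst x))"
    "fst x = (\<lambda>\<phi>. if \<phi> \<in> A \<and> cod_c \<phi> = n \<and> dom_c \<phi> \<le> 1 then Ylift A p (comp_c (C2.gof n (fst x)) \<phi>) else undefined)"
proof -
  have xc: "x \<in> cosk_cells A Y2 ly S n" using x by (simp add: cosk_def)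
  have U: "C2.U1 n (fst x)" "C2.U2 n (fst x)"
    unfolding C2.U1_def C2.U2_def using cosk_cellsD[OF xc] by blast+
  show q: "C2.Q n (fst x) (C2.gof n (fst x))" using C2.gof_Q[OF U] .
  show "fst x = (\<lambda>\<phi>. if \<phi> \<in> A \<and> cod_c \<phi> = n \<and> dom_c \<phi> \<le> 1 then Ylift A p (comp_c (C2.gof n (fst x)) \<phi>) else undefined)"
  proof
    fix \<phi>
    show "fst x \<phi> = (if \<phi> \<in> A \<and> cod_c \<phi> = n \<and> dom_c \<phi> \<le> 1 then Ylift A p (comp_c (C2.gof n (fst x)) \<phi>) else undefined)"
    proof (cases "\<phi> \<in> A \<and> cod_c \<phi> = n \<and> dom_c \<phi> \<le> 1")
      case True then show ?thesis using q unfolding C2.Q_def by simp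
    next
      case False
      show ?thesis unfolding if_not_P[OF False] using cosk_cellsD(2)[OF xc False] .
    qed
  qed
qed

end


lemma rep_eq: "length w = k \<Longrightarrow> set w \<subseteq> {t} \<Longrightarrow> w = replicate k t"
  by (rule replicate_eqI) auto

context cosk2 begin

lemma Q_inj: "C2.Q n u g \<Longrightarrow> C2.Q n u g' \<Longrightarrow> g = g'" by (rule C2.Q_uniq)

lemma Phi_fst_Q: "adj_pres g \<Longrightarrow> dom_c g = n \<Longrightarrow> cod_c g = p \<Longrightarrow> C2.Q n (fst (Phi g)) g"
  unfolding Phi_def C2.Q_def by simp

lemma kc_Phi:
  assumes x: "x \<in> kc n" and gA: "C2.gof n (fst x) \<in> A"
  shows "x = Phi (C2.gof n (fst x))"
proof -
  let ?g = "C2.gof n (fst x)"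
  have q: "C2.Q n (fst x) ?g" using kc_D[OF x] by blast
  have g: "adj_pres ?g" "dom_c ?g = n" "cod_c ?g = p" using q unfolding C2.Q_def by auto
  have xc: "x \<in> cosk_cells A Y2 ly S n" using x by simp
  have f: "fst x = fst (Phi ?g)" using kc_D(2)[OF x] g unfolding Phi_def by simp
  have "snd x = lbl ?g"
  proof (rule S_unique)
    show "snd x \<in> cells S n" using cosk_cellsD(1)[OF xc] .
    show "lbl ?g \<in> cells S n" using lbl_cell[OF gA g(3)] g by simp
    fix \<phi> assume \<phi>: "\<phi> \<in> A" "cod_c \<phi> = n" "dom_c \<phi> \<le> 1"
    have "act S \<phi> (snd x) = ly (dom_c \<phi>) (fst x \<phi>)" using cosk_cellsD(3)[OF xc \<phi>] by simp
    also have "fst x \<phi> = Ylift A p (comp_c ?g \<phi>)" using q \<phi> unfolding C2.Q_def by simp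
    also have "ly (dom_c \<phi>) (Ylift A p (comp_c ?g \<phi>)) = lbl (comp_c ?g \<phi>)"
      using lbl_ly[OF gcomp_A[OF g(1) \<phi>(1)]] \<phi> g by simp
    also have "\<dots> = act S \<phi> (lbl ?g)" using act_lbl[OF gA g(3) \<phi>(1)] \<phi> g by simp
    finally show "act S \<phi> (snd x) = act S \<phi> (lbl ?g)" .
  qed
  then show ?thesis using f by (simp add: prod_eq_iff Phi_def)
qed

lemma Iso2:
  assumes HA: "\<And>g. adj_pres g \<Longrightarrow> g \<in> A"
  shows "lps_iso A (LA A (box_cube p)) ly (cosk A Y2 ly S) cosk_lab"
proof -
  define F where "F n = {f \<in> A. dom_c f = n \<and> cod_c f = p}" for n
  define h where "h n C = Phi (inv_into (F n) (Ylift A p) C)" for n C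
  have bY: "bij_betw (Ylift A p) (F n) (cells (LA A (box_cube p)) n)" for n
    unfolding bij_betw_def F_def Y4[OF A]
    by (auto intro!: inj_onI dest: Y3[OF A] simp: cat_wf[OF A])
  have ivY: "inv_into (F n) (Ylift A p) (Ylift A p g) = g" if "g \<in> F n" for n g
    using bY that bij_betw_inv_into_left by metis
  have bPhi: "bij_betw Phi (F n) (kc n)" for n
  proof (rule bij_betw_imageI)
    show "inj_on Phi (F n)"
    proof (rule inj_onI)
      fix g g' assume g: "g \<in> F n" "g' \<in> F n" and e: "Phi g = Phi g'"
      have "C2.Q n (fst (Phi g)) g" "C2.Q n (fst (Phi g')) g'"
        using Phi_fst_Q g cat_adj[OF A] unfolding F_def by auto
      then show "g = g'" using e C2.Q_uniq by metis
    qed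
    show "Phi ` F n = kc n"
    proof
      show "Phi ` F n \<subseteq> kc n" using Phi_cell cat_adj[OF A] unfolding F_def by blast
      show "kc n \<subseteq> Phi ` F n"
      proof
        fix x assume x: "x \<in> kc n"
        have q: "C2.Q n (fst x) (C2.gof n (fst x))" using kc_D[OF x] by blast
        then have "C2.gof n (fst x) \<in> F n" using HA unfolding C2.Q_def F_def by auto
        then show "x \<in> Phi ` F n" using kc_Phi[OF x] HA F_def by blast
      qed
    qed
  qed
  have bij: "bij_betw (h n) (cells (LA A (box_cube p)) n) (kc n)" for n
    unfolding h_def using bij_betw_trans[OF bij_betw_inv_into[OF bY] bPhi] by (simp add: comp_def)
  have nat: "h (dom_c f) (act (LA A (box_cube p)) f C) = act (cosk A Y2 ly S) f (h (cod_c f) C)"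
    if f: "f \<in> A" "C \<in> cells (LA A (box_cube p)) (cod_c f)" for f C
  proof -
    obtain g where g: "g \<in> F (cod_c f)" "C = Ylift A p g" using f(2) Y4[OF A] F_def by auto
    have gg: "g \<in> A" "dom_c g = cod_c f" "cod_c g = p" using g F_def by auto
    have gf: "comp_c g f \<in> F (dom_c f)" using cat_comp[OF A f(1) gg(1)] gg F_def by simp
    have 1: "h (dom_c f) (act (LA A (box_cube p)) f C) = Phi (comp_c g f)"
      unfolding h_def g(2) Y5[OF A f(1) gg(1) gg(2)] ivY[OF gf] ..
    have 2: "h (cod_c f) C = Phi g" unfolding h_def g(2) ivY[OF g(1)] ..
    have "cosk_act A Y2 S f (Phi g) = Phi (comp_c g f)"
    proof -
      have "(\<lambda>\<phi>. if \<phi> \<in> A \<and> cod_c \<phi> = dom_c f \<and> dom_c \<phi> \<le> 1 then fst (Phi g) (comp_c f \<phi>) else undefined)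
          = fst (Phi (comp_c g f))"
      proof
        fix \<phi>
        show "(if \<phi> \<in> A \<and> cod_c \<phi> = dom_c f \<and> dom_c \<phi> \<le> 1 then fst (Phi g) (comp_c f \<phi>) else undefined)
          = fst (Phi (comp_c g f)) \<phi>"
        proof (cases "\<phi> \<in> A \<and> cod_c \<phi> = dom_c f \<and> dom_c \<phi> \<le> 1")
          case True
          have "comp_c f \<phi> \<in> A" using cat_comp[OF A _ f(1)] True by simp
          moreover have "comp_c g (comp_c f \<phi>) = comp_c (comp_c g f) \<phi>"
            using comp_assoc[OF cat_wf[OF A]] True by simp
          ultimately show ?thesis using True gg by (simp add: Phi_def)
        next
          case False
          have F2: "\<not> (\<phi> \<in> A \<and> cod_c \<phi> = dom_c (comp_c g f) \<and> dom_c \<phi> \<le> 1)" using False by simp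
          show ?thesis by (simp only: Phi_def fst_conv if_not_P[OF False] if_not_P[OF F2])
        qed
      qed
      moreover have "act S f (lbl g) = lbl (comp_c g f)" using act_lbl[OF gg(1) gg(3) f(1) gg(2)] .
      ultimately show ?thesis unfolding cosk_act_def by (simp add: Phi_def)
    qed
    then show ?thesis using 1 2 by simp
  qed
  have lab: "cosk_lab n (h n C) = ly n C" if C: "C \<in> cells (LA A (box_cube p)) n" for n C
  proof -
    obtain g where g: "g \<in> F n" "C = Ylift A p g" using C Y4[OF A] F_def by auto
    have "h n C = Phi g" unfolding h_def g(2) ivY[OF g(1)] ..
    then show ?thesis using lbl_ly[of g] g F_def by (auto simp: cosk_lab_def Phi_def)
  qed
  show ?thesis unfolding lps_iso_def using bij nat lab by blast
qed

end


lemma finite_cube: "finite (cube n)"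
proof -
  have "cube n = {xs :: vert. set xs \<subseteq> UNIV \<and> length xs = n}" by auto
  then show ?thesis using finite_lists_length_eq[of "UNIV :: bool set" n] by simp
qed

lemma finite_hom: "finite {f. wf_map f \<and> dom_c f = n \<and> cod_c f = p}"
proof -
  obtain vs where vs: "set vs = cube n" using finite_list[OF finite_cube] by blast
  let ?H = "{f. wf_map f \<and> dom_c f = n \<and> cod_c f = p}"
  let ?m = "\<lambda>f. map (fun_c f) vs"
  show ?thesis
  proof (rule inj_on_finite[of ?m ?H "{xs. set xs \<subseteq> cube p \<and> length xs = length vs}"])
    show "inj_on ?m ?H"
    proof (rule inj_onI)
      fix f g assume f: "f \<in> ?H" and g: "g \<in> ?H" and e: "?m f = ?m g"
      show "f = g"
      proof (rule wf_eq)
        show "wf_map f" "wf_map g" "dom_c f = dom_c g" "cod_c f = cod_c g" using f g by auto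
        fix v :: vert assume "length v = dom_c f"
        then have "v \<in> set vs" using vs f by simp
        then show "fun_c f v = fun_c g v" using e by simp
      qed
    qed
    show "?m ` ?H \<subseteq> {xs. set xs \<subseteq> cube p \<and> length xs = length vs}"
      using vs wf_len by auto
    show "finite {xs. set xs \<subseteq> cube p \<and> length xs = length vs}"
      using finite_lists_length_eq[OF finite_cube] by blast
  qed
qed

context cosk2 begin

definition st :: "'s \<Rightarrow> nat \<Rightarrow> (nat \<times> 's list \<times> cmap) set set" where
  "st t n = shc A X n (cls A (bang \<Sigma>) (n, replicate n t, idc n))"

lemma rep_class:
  assumes t: "t \<in> \<Sigma>" and e: "e \<in> box" "dom_c e = k" "cod_c e = m" and k: "k \<le> 1"
  shows "cls A (bang \<Sigma>) (m, replicate m t, e) = cls A (bang \<Sigma>) (k, replicate k t, idc k)"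
proof -
  have "((k, act (bang \<Sigma>) e (replicate m t), idc k), (cod_c e, replicate m t, comp_c e (idc k))) \<in> LA_gen A (bang \<Sigma>)"
    by (rule genI) (use e t cat_idc[OF A] in auto)
  moreover have "act (bang \<Sigma>) e (replicate m t) = replicate k t"
    using bang_len[OF e(1), of "replicate m t"] bang_set[of "replicate m t" e] e
    by (intro rep_eq) (auto split: if_splits)
  moreover have "comp_c e (idc k) = e" using comp_idc_r[OF box_wf[OF e(1)]] e by simp
  ultimately have "((k, replicate k t, idc k), (m, replicate m t, e)) \<in> LA_rel A (bang \<Sigma>)"
    using gen_step e by simp
  then show ?thesis using cls_eq LA_rel_sym by metis
qed

lemma Phit_cell:
  assumes t: "t \<in> \<Sigma>" and ar: "a = replicate p t"
    and g: "adj_pres g" "dom_c g = n" "cod_c g = p"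
  shows "((\<lambda>\<phi>. if \<phi> \<in> A \<and> cod_c \<phi> = n \<and> dom_c \<phi> \<le> 1 then Ylift A p (comp_c g \<phi>) else undefined), st t n) \<in> kc n"
proof (rule cosk_cellsI[OF g])
  have el: "(n, replicate n t, idc n) \<in> LA_elems A (bang \<Sigma>) n" using t cat_idc[OF A] by (auto simp: LA_elems_def)
  then have c: "cls A (bang \<Sigma>) (n, replicate n t, idc n) \<in> cells X n" using cells_LA by blast
  then show "st t n \<in> cells S n" unfolding st_def ShL_def cells_sh by blast
  fix \<phi> assume \<phi>: "\<phi> \<in> A" "cod_c \<phi> = n" "dom_c \<phi> \<le> 1"
  have eA: "comp_c g \<phi> \<in> A" using gcomp_A[OF g(1) \<phi>(1)] \<phi> g by simp
  have eb: "comp_c g \<phi> \<in> box" using adj_low_box adj_comp[OF g(1) cat_adj[OF A \<phi>(1)]] \<phi> g by simp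
  have \<phi>b: "\<phi> \<in> box" using adj_low_box cat_adj[OF A \<phi>(1)] \<phi> by simp
  have "lbl (comp_c g \<phi>) = shc A X (dom_c \<phi>) (cls A (bang \<Sigma>) (p, replicate p t, comp_c g \<phi>))"
    unfolding lbl_def using ar by simp
  also have "cls A (bang \<Sigma>) (p, replicate p t, comp_c g \<phi>) = cls A (bang \<Sigma>) (dom_c \<phi>, replicate (dom_c \<phi>) t, idc (dom_c \<phi>))"
    using rep_class[OF t eb] \<phi> g by simp
  finally have 1: "lbl (comp_c g \<phi>) = shc A X (dom_c \<phi>) (cls A (bang \<Sigma>) (dom_c \<phi>, replicate (dom_c \<phi>) t, idc (dom_c \<phi>)))" .
  have el': "(n, replicate n t, idc n) \<in> LA_elems A (bang \<Sigma>) (cod_c \<phi>)" using el \<phi> by simp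
  have "act S \<phi> (st t n) = shc A X (dom_c \<phi>) (act X \<phi> (cls A (bang \<Sigma>) (n, replicate n t, idc n)))"
    unfolding st_def ShL_def using act_shc[OF X_closed \<phi>(1)] c \<phi>(2) by metis
  also have "act X \<phi> (cls A (bang \<Sigma>) (n, replicate n t, idc n)) = cls A (bang \<Sigma>) (n, replicate n t, comp_c (idc n) \<phi>)"
    using conjunct1[OF act_cls_elems[OF A \<phi>(1) el']] by simp
  also have "comp_c (idc n) \<phi> = \<phi>" using comp_idc_l[OF cat_wf[OF A \<phi>(1)] \<phi>(2)] .
  also have "cls A (bang \<Sigma>) (n, replicate n t, \<phi>) = cls A (bang \<Sigma>) (dom_c \<phi>, replicate (dom_c \<phi>) t, idc (dom_c \<phi>))"
    using rep_class[OF t \<phi>b] \<phi> by simp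
  finally show "lbl (comp_c g \<phi>) = act S \<phi> (st t n)" using 1 by simp
qed

end


context cosk2 begin

lemma no_iso:
  assumes t: "t \<in> \<Sigma>" and ar: "a = replicate p t"
    and f: "adj_pres f" "dom_c f = n" "cod_c f = p" "f \<notin> A"
    and iso: "lps_iso A (LA A (COSK_box \<Sigma> a)) (LA_lab A \<Sigma> cosk_lab) (cosk A Y2 ly S) cosk_lab"
  shows False
proof -
  define FA where "FA = {g \<in> A. dom_c g = n \<and> cod_c g = p}"
  define FH where "FH = {g. adj_pres g \<and> dom_c g = n \<and> cod_c g = p}"
  obtain h1 where h1: "bij_betw (h1 n) (cells (LA A (COSK_box \<Sigma> a)) n) (kc n)"
    using iso unfolding lps_iso_def by blast
  obtain h2 where h2: "bij_betw (h2 n) (cells (LA A (COSK_box \<Sigma> a)) n) (cells (LA A (box_cube p)) n)"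
    using Iso1[OF A] unfolding lps_iso_def by blast
  have bY: "bij_betw (Ylift A p) FA (cells (LA A (box_cube p)) n)"
    unfolding bij_betw_def FA_def Y4[OF A]
    by (auto intro!: inj_onI dest: Y3[OF A] simp: cat_wf[OF A])
  define \<beta> where "\<beta> = inv_into FA (Ylift A p) \<circ> (h2 n \<circ> inv_into (cells (LA A (COSK_box \<Sigma> a)) n) (h1 n))"
  have b\<beta>: "bij_betw \<beta> (kc n) FA"
    unfolding \<beta>_def
    by (rule bij_betw_trans[OF bij_betw_trans[OF bij_betw_inv_into[OF h1] h2] bij_betw_inv_into[OF bY]])
  define \<iota> where "\<iota> g = ((\<lambda>\<phi>. if \<phi> \<in> A \<and> cod_c \<phi> = n \<and> dom_c \<phi> \<le> 1 then Ylift A p (comp_c g \<phi>) else undefined), st t n)" for g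
  have \<iota>c: "\<iota> g \<in> kc n" if gH: "g \<in> FH" for g
  proof -
    have "adj_pres g" "dom_c g = n" "cod_c g = p" using gH unfolding FH_def by simp_all
    then show ?thesis unfolding \<iota>_def by (rule Phit_cell[OF t ar])
  qed
  have \<iota>i: "inj_on \<iota> FH"
  proof (rule inj_onI)
    fix g g' assume g: "g \<in> FH" "g' \<in> FH" and e: "\<iota> g = \<iota> g'"
    have g1: "adj_pres g" "dom_c g = n" "cod_c g = p" using g(1) unfolding FH_def by simp_all
    have g2: "adj_pres g'" "dom_c g' = n" "cod_c g' = p" using g(2) unfolding FH_def by simp_all
    have q1: "C2.Q n (fst (\<iota> g)) g" unfolding \<iota>_def fst_conv by (rule uQ[OF g1])
    have q2: "C2.Q n (fst (\<iota> g')) g'" unfolding \<iota>_def fst_conv by (rule uQ[OF g2])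
    have "C2.Q n (fst (\<iota> g)) g'" using q2 e by simp
    then show "g = g'" using q1 C2.Q_uniq by blast
  qed
  have inj: "inj_on (\<beta> \<circ> \<iota>) FH"
  proof (rule comp_inj_on[OF \<iota>i])
    have "\<iota> ` FH \<subseteq> kc n" using \<iota>c by blast
    then show "inj_on \<beta> (\<iota> ` FH)" using inj_on_subset[OF bij_betw_imp_inj_on[OF b\<beta>]] by blast
  qed
  have img: "(\<beta> \<circ> \<iota>) ` FH \<subseteq> FA"
  proof
    fix y assume "y \<in> (\<beta> \<circ> \<iota>) ` FH"
    then obtain g where g: "g \<in> FH" "y = \<beta> (\<iota> g)" by auto
    then show "y \<in> FA" using bij_betwE[OF b\<beta>] \<iota>c[OF g(1)] by blast
  qed
  have finH: "finite FH"
    by (rule finite_subset[OF _ finite_hom[of n p]]) (auto simp: FH_def adj_pres_def)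
  have sub: "FA \<subset> FH"
  proof
    show "FA \<subseteq> FH" using cat_adj[OF A] unfolding FA_def FH_def by auto
    show "FA \<noteq> FH" using f unfolding FA_def FH_def by auto
  qed
  have "card FH \<le> card FA" using card_inj_on_le[OF inj img] finite_subset[OF _ finH] sub by blast
  moreover have "card FA < card FH" using psubset_card_mono[OF finH sub] .
  ultimately show False by simp
qed

end

lemma part2:
  assumes a: "set a \<subseteq> \<Sigma>"
  shows "lps_iso hat_box (LA hat_box (COSK_box \<Sigma> a)) (LA_lab hat_box \<Sigma> cosk_lab)
              (LA hat_box (box_cube (length a))) (LA_lab hat_box \<Sigma> (box_lab a))
          \<and> lps_iso hat_box
              (cosk hat_box (trunc1 (LA hat_box (box_cube (length a)))) (LA_lab hat_box \<Sigma> (box_lab a)) (ShL hat_box \<Sigma>))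
              cosk_lab
              (LA hat_box (box_cube (length a))) (LA_lab hat_box \<Sigma> (box_lab a))"
proof -
  interpret cosk2 \<Sigma> a hat_box using a cat_hat by unfold_locales
  have HA: "\<And>g. adj_pres g \<Longrightarrow> g \<in> hat_box" by (simp add: hat_box_def)
  show ?thesis
    using Iso1[OF cat_hat] lps_iso_sym[OF Iso2[OF HA] LA_closed[OF cat_hat]] by blast
qed

lemma part1_if:
  assumes a: "set a \<subseteq> \<Sigma>"
  shows "lps_iso hat_box (LA hat_box (COSK_box \<Sigma> a)) (LA_lab hat_box \<Sigma> cosk_lab)
                  (cosk hat_box (trunc1 (LA hat_box (box_cube (length a)))) (LA_lab hat_box \<Sigma> (box_lab a)) (ShL hat_box \<Sigma>))
                  cosk_lab"
proof -
  interpret cosk2 \<Sigma> a hat_box using a cat_hat by unfold_locales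
  have HA: "\<And>g. adj_pres g \<Longrightarrow> g \<in> hat_box" by (simp add: hat_box_def)
  show ?thesis using lps_iso_trans[OF Iso1[OF cat_hat] Iso2[OF HA]] .
qed

lemma part1_only:
  assumes t: "\<tau> \<in> \<Sigma>" and A: "cat_of_cubes A"
    and H: "\<forall>a. length a \<ge> 1 \<and> set a \<subseteq> \<Sigma> \<longrightarrow>
                lps_iso A (LA A (COSK_box \<Sigma> a)) (LA_lab A \<Sigma> cosk_lab)
                  (cosk A (trunc1 (LA A (box_cube (length a)))) (LA_lab A \<Sigma> (box_lab a)) (ShL A \<Sigma>))
                  cosk_lab"
  shows "A = hat_box"
proof (rule ccontr)
  assume ne: "A \<noteq> hat_box"
  have "A \<subseteq> hat_box" using cat_adj[OF A] hat_box_def by blast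
  then obtain f where f: "adj_pres f" "f \<notin> A" using ne hat_box_def by blast
  have wf: "wf_map f" using f adj_pres_def by blast
  have p1: "cod_c f \<ge> 1"
  proof (rule ccontr)
    assume "\<not> cod_c f \<ge> 1"
    then have c0: "cod_c f = 0" by simp
    then have d0: "dom_c f = 0" using hat_dom_le[OF f(1)] by simp
    have "f = idc 0"
    proof (rule wf_eq[OF wf wf_idc])
      show "dom_c f = dom_c (idc 0)" "cod_c f = cod_c (idc 0)" using c0 d0 by auto
      fix v :: vert assume "length v = dom_c f"
      then have v: "v = []" using d0 by simp
      have "length (fun_c f v) = 0" using wf_len[OF wf] v d0 c0 by simp
      then show "fun_c f v = fun_c (idc 0) v" using v idc_fun[of v 0] by simp
    qed
    then show False using f(2) cat_idc[OF A] by simp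
  qed
  define a where "a = replicate (cod_c f) \<tau>"
  have aa: "set a \<subseteq> \<Sigma>" "length a = cod_c f" using t a_def by auto
  interpret cosk2 \<Sigma> a A using aa(1) A by unfold_locales
  have iso: "lps_iso A (LA A (COSK_box \<Sigma> a)) (LA_lab A \<Sigma> cosk_lab)
                  (cosk A (trunc1 (LA A (box_cube (length a)))) (LA_lab A \<Sigma> (box_lab a)) (ShL A \<Sigma>))
                  cosk_lab"
  proof -
    have l1: "1 \<le> length a" using aa(2) p1 by simp
    then show ?thesis using H aa(1) by blast
  qed
  have ar: "a = replicate (length a) \<tau>" using a_def aa(2) by simp
  have cf: "cod_c f = length a" using aa(2) by simp
  show False by (rule no_iso[OF t ar f(1) refl cf f(2) iso])
qed

theorem theorem7p24:
  fixes \<Sigma> :: "'s set" and \<tau> :: 's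
  assumes "\<tau> \<in> \<Sigma>"
  shows "(\<forall>A. cat_of_cubes A \<longrightarrow>
            ((\<forall>a. length a \<ge> 1 \<and> set a \<subseteq> \<Sigma> \<longrightarrow>
                lps_iso A (LA A (COSK_box \<Sigma> a)) (LA_lab A \<Sigma> cosk_lab)
                  (cosk A (trunc1 (LA A (box_cube (length a)))) (LA_lab A \<Sigma> (box_lab a)) (ShL A \<Sigma>))
                  cosk_lab)
             \<longleftrightarrow> A = hat_box))
      \<and> (\<forall>a. length a \<ge> 1 \<and> set a \<subseteq> \<Sigma> \<longrightarrow>
            lps_iso hat_box (LA hat_box (COSK_box \<Sigma> a)) (LA_lab hat_box \<Sigma> cosk_lab)
              (LA hat_box (box_cube (length a))) (LA_lab hat_box \<Sigma> (box_lab a))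
          \<and> lps_iso hat_box
              (cosk hat_box (trunc1 (LA hat_box (box_cube (length a)))) (LA_lab hat_box \<Sigma> (box_lab a)) (ShL hat_box \<Sigma>))
              cosk_lab
              (LA hat_box (box_cube (length a))) (LA_lab hat_box \<Sigma> (box_lab a)))"
proof (intro conjI allI impI)
  fix A :: "cmap set" assume A: "cat_of_cubes A"
  show "(\<forall>a. length a \<ge> 1 \<and> set a \<subseteq> \<Sigma> \<longrightarrow>
                lps_iso A (LA A (COSK_box \<Sigma> a)) (LA_lab A \<Sigma> cosk_lab)
                  (cosk A (trunc1 (LA A (box_cube (length a)))) (LA_lab A \<Sigma> (box_lab a)) (ShL A \<Sigma>))
                  cosk_lab)
             \<longleftrightarrow> A = hat_box"
  proof
    assume H: "\<forall>a. length a \<ge> 1 \<and> set a \<subseteq> \<Sigma> \<longrightarrow>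
                lps_iso A (LA A (COSK_box \<Sigma> a)) (LA_lab A \<Sigma> cosk_lab)
                  (cosk A (trunc1 (LA A (box_cube (length a)))) (LA_lab A \<Sigma> (box_lab a)) (ShL A \<Sigma>))
                  cosk_lab"
    show "A = hat_box" by (rule part1_only[OF assms A H])
  next
    assume "A = hat_box"
    then show "\<forall>a. length a \<ge> 1 \<and> set a \<subseteq> \<Sigma> \<longrightarrow>
                lps_iso A (LA A (COSK_box \<Sigma> a)) (LA_lab A \<Sigma> cosk_lab)
                  (cosk A (trunc1 (LA A (box_cube (length a)))) (LA_lab A \<Sigma> (box_lab a)) (ShL A \<Sigma>))
                  cosk_lab" using part1_if by blast
  qed
next
  fix a :: "'s list" assume "length a \<ge> 1 \<and> set a \<subseteq> \<Sigma>"
  then show "lps_iso hat_box (LA hat_box (COSK_box \<Sigma> a)) (LA_lab hat_box \<Sigma> cosk_lab)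
              (LA hat_box (box_cube (length a))) (LA_lab hat_box \<Sigma> (box_lab a))"
    "lps_iso hat_box
              (cosk hat_box (trunc1 (LA hat_box (box_cube (length a)))) (LA_lab hat_box \<Sigma> (box_lab a)) (ShL hat_box \<Sigma>))
              cosk_lab
              (LA hat_box (box_cube (length a))) (LA_lab hat_box \<Sigma> (box_lab a))"
    using part2 by blast+
qed


end
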